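(* Let $F$ be a field, $P\in F[t]$ monic irreducible of degree $d\ge1$, $F(P)=F[t]/(P)$, and let $s_P:V_{d-1}\to F(P)^*\otimes\mathbb{Q}$ be the reduction map modulo $P$. Then $\ker(s_P)$ is isomorphic to the $\mathbb{Q}$-vector space generated by symbols $y(a,b)$, $a,b\in F(P)^*$, subject to the relations: $y(a,b)=0$ if $\deg\widetilde a+\deg\widetilde b<d$; $y(a,b)=y(b,a)$; $y(a,b)+y(ab,c)-y(a,c)-y(ac,b)=0$. The isomorphism sends $y(a,b)$ to the element $\widetilde a\,\widetilde b/\widetilde{ab}$ of $V_{d-1}$ (written additively: $\widetilde a+\widetilde b-\widetilde{ab}$).
   Context: $V_{d-1}\subset F(t)^*\otimes\mathbb{Q}$ is the $\mathbb{Q}$-span of all nonzero polynomials of degree $<d$ (the subgroup generated by such polynomials, tensored with $\mathbb{Q}$). For $c\in F(P)^*$, $\widetilde c\in F[t]$ is its unique representative of degree $<d$. *)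

theory Defs
  imports "HOL-Computational_Algebra.Polynomial_Factorial"
begin

definition fin_supp :: "('b \<Rightarrow> rat) \<Rightarrow> bool" where
  "fin_supp w \<longleftrightarrow> finite {x. w x \<noteq> 0}"

definition qspan :: "('b \<Rightarrow> rat) set \<Rightarrow> ('b \<Rightarrow> rat) set" where
  "qspan S = {x. \<exists>T u. finite T \<and> T \<subseteq> S \<and> x = (\<lambda>p. \<Sum>r\<in>T. u r * r p)}"

text \<open>For a commutative monoid whose relevant elements are units, with equality
  relation eq, the element  sum_g g (x) w(g)  of  G (x) Q  vanishes iff some positive
  integer multiple of it is an integral combination giving the identity, i.e.
  the product of the positive-exponent part equals the product of the negative one.\<close>
definition tensorQ_zero :: "('g::comm_monoid_mult \<Rightarrow> 'g \<Rightarrow> bool) \<Rightarrow> ('g \<Rightarrow> rat) \<Rightarrow> bool" where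
  "tensorQ_zero eq w \<longleftrightarrow>
     (\<exists>N::nat. N > 0 \<and> (\<forall>g. of_nat N * w g \<in> \<int>) \<and>
        eq (\<Prod>g\<in>{g. 0 < w g}. g ^ nat \<lfloor>of_nat N * w g\<rfloor>)
           (\<Prod>g\<in>{g. w g < 0}. g ^ nat \<lfloor>- (of_nat N * w g)\<rfloor>))"

text \<open>Representatives of F(P)^*: nonzero polynomials of degree < d.\<close>
definition units_rep :: "'a::field poly \<Rightarrow> 'a poly set" where
  "units_rep P = {a. a \<noteq> 0 \<and> degree a < degree P}"

text \<open>V_{d-1}: formal Q-combinations of nonzero polynomials of degree < d,
  viewed in F(t)^* (x) Q (equality given by zero_FtQ of the difference).\<close>
definition Vspace :: "'a::field poly \<Rightarrow> ('a poly \<Rightarrow> rat) set" where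
  "Vspace P = {w. fin_supp w \<and> {f. w f \<noteq> 0} \<subseteq> units_rep P}"

definition zero_FtQ :: "('a::field poly \<Rightarrow> rat) \<Rightarrow> bool" where
  "zero_FtQ w \<longleftrightarrow> tensorQ_zero (=) w"

text \<open>s_P(w) = 0 in F(P)^* (x) Q (reduction modulo P).\<close>
definition sP_zero :: "'a::field poly \<Rightarrow> ('a poly \<Rightarrow> rat) \<Rightarrow> bool" where
  "sP_zero P w \<longleftrightarrow> tensorQ_zero (\<lambda>x y. x mod P = y mod P) w"

definition yimg :: "'a::field poly \<Rightarrow> 'a poly \<Rightarrow> 'a poly \<Rightarrow> ('a poly \<Rightarrow> rat)" where
  "yimg P a b = (\<lambda>f. (if f = a then 1 else 0) + (if f = b then 1 else 0)
                       - (if f = (a * b) mod P then 1 else 0))"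

definition Phi :: "'a::field poly \<Rightarrow> ('a poly \<times> 'a poly \<Rightarrow> rat) \<Rightarrow> ('a poly \<Rightarrow> rat)" where
  "Phi P c = (\<lambda>f. \<Sum>p\<in>{p. c p \<noteq> 0}. c p * yimg P (fst p) (snd p) f)"

text \<open>Free Q-vector space on symbols y(a,b), a,b in F(P)^*.\<close>
definition freeY :: "'a::field poly \<Rightarrow> ('a poly \<times> 'a poly \<Rightarrow> rat) set" where
  "freeY P = {c. fin_supp c \<and> {p. c p \<noteq> 0} \<subseteq> units_rep P \<times> units_rep P}"

definition ygen :: "'a poly \<Rightarrow> 'a poly \<Rightarrow> ('a poly \<times> 'a poly \<Rightarrow> rat)" where
  "ygen a b = (\<lambda>q. if q = (a, b) then 1 else 0)"

definition rels :: "'a::field poly \<Rightarrow> ('a poly \<times> 'a poly \<Rightarrow> rat) set" where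
  "rels P =
     {ygen a b | a b. a \<in> units_rep P \<and> b \<in> units_rep P \<and> degree a + degree b < degree P}
   \<union> {(\<lambda>q. ygen a b q - ygen b a q) | a b. a \<in> units_rep P \<and> b \<in> units_rep P}
   \<union> {(\<lambda>q. ygen a b q + ygen ((a * b) mod P) c q - ygen a c q - ygen ((a * c) mod P) b q)
       | a b c. a \<in> units_rep P \<and> b \<in> units_rep P \<and> c \<in> units_rep P}"

end

theory Submission
  imports Defs "HOL-Algebra.Group" "HOL-Library.Function_Algebras"
begin

lemma (in group) graph_int_pow:
  fixes M :: "('a \<times> rat) set"
  assumes Mpow_nat: "\<And>y s n. (y,s) \<in> M \<Longrightarrow> (y [^] (n::nat), of_nat n * s) \<in> M"
  and Minv: "\<And>x r. (x,r)\<in>M \<Longrightarrow> (inv x, -r) \<in> M"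
  and that: "(y,s) \<in> M" shows "(y [^] (n::int), of_int n * s) \<in> M"
  proof (cases "n \<ge> 0")
    case True
    have e1: "y [^] n = y [^] nat n" using True by (rule pow_nat[symmetric])
    have e2: "(of_int n :: rat) = of_nat (nat n)" using True by simp
    show ?thesis unfolding e1 e2 by (rule Mpow_nat[OF that])
  next
    case False
    have e1: "y [^] n = inv (y [^] nat (-n))" using False by (subst int_pow_def2) (rule if_P, simp)
    have e2: "(of_int n :: rat) * s = - (of_nat (nat (-n)) * s)" using False by simp
    show ?thesis unfolding e1 e2 by (rule Minv[OF Mpow_nat[OF that]])
  qed

lemma (in comm_group) rat_hom_extend:
  fixes h :: "'a \<Rightarrow> rat"
  assumes H: "subgroup H G" and hh: "\<forall>x\<in>H. \<forall>y\<in>H. h (x \<otimes> y) = h x + h y"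
  shows "\<exists>h'. (\<forall>x\<in>H. h' x = h x) \<and> (\<forall>x\<in>carrier G. \<forall>y\<in>carrier G. h' (x \<otimes> y) = h' x + h' y)"
proof -
  have Hsub: "H \<subseteq> carrier G" using H subgroup.subset by blast
  have h1: "h \<one> = 0"
  proof -
    have "h (\<one> \<otimes> \<one>) = h \<one> + h \<one>" using hh subgroup.one_closed[OF H] by blast
    then show ?thesis by simp
  qed
  have hinv: "h (inv x) = - h x" if "x \<in> H" for x
  proof -
    have "h (x \<otimes> inv x) = h x + h (inv x)" using hh that subgroup.m_inv_closed[OF H] by blast
    moreover have "x \<otimes> inv x = \<one>" using that Hsub by auto
    ultimately show ?thesis using h1 by simp
  qed
  define A where "A = {\<Gamma>. \<Gamma> \<subseteq> carrier G \<times> UNIV \<and> (\<forall>x r s. (x,r)\<in>\<Gamma> \<longrightarrow> (x,s)\<in>\<Gamma> \<longrightarrow> r = s)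
     \<and> (\<forall>x\<in>H. (x, h x) \<in> \<Gamma>) \<and> (\<forall>x r y s. (x,r)\<in>\<Gamma> \<longrightarrow> (y,s)\<in>\<Gamma> \<longrightarrow> (x\<otimes>y, r+s)\<in>\<Gamma>)
     \<and> (\<forall>x r. (x,r)\<in>\<Gamma> \<longrightarrow> (inv x, -r) \<in> \<Gamma>)}"
  define G0 where "G0 = {(x, h x) | x. x \<in> H}"
  have G0A: "G0 \<in> A"
    unfolding A_def G0_def using Hsub hh hinv subgroup.m_closed[OF H] subgroup.m_inv_closed[OF H]
    by auto
  have "\<forall>C\<in>chains A. \<exists>U\<in>A. \<forall>X\<in>C. X \<subseteq> U"
  proof
    fix C assume C: "C \<in> chains A"
    show "\<exists>U\<in>A. \<forall>X\<in>C. X \<subseteq> U"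
    proof (cases "C = {}")
      case True then show ?thesis using G0A by blast
    next
      case False
      have CA: "C \<subseteq> A" and ch: "\<forall>X\<in>C. \<forall>Y\<in>C. X \<subseteq> Y \<or> Y \<subseteq> X"
        using C unfolding chains_def chain_subset_def by auto
      have "\<Union>C \<in> A"
        unfolding A_def
      proof (intro CollectI conjI allI impI ballI)
        show "\<Union>C \<subseteq> carrier G \<times> UNIV" using CA unfolding A_def by blast
      next
        fix x r s assume "(x,r) \<in> \<Union>C" "(x,s) \<in> \<Union>C"
        then obtain X Y where "X\<in>C" "Y\<in>C" "(x,r)\<in>X" "(x,s)\<in>Y" by blast
        then have "(x,r) \<in> X \<union> Y" "(x,s) \<in> X \<union> Y" by auto
        moreover have "X \<union> Y \<in> C" using ch \<open>X\<in>C\<close> \<open>Y\<in>C\<close> by (metis sup.absorb1 sup.absorb2)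
        ultimately show "r = s" using CA unfolding A_def by blast
      next
        fix x assume "x \<in> H"
        obtain X where "X \<in> C" using False by blast
        then show "(x, h x) \<in> \<Union>C" using CA \<open>x\<in>H\<close> unfolding A_def by blast
      next
        fix x r y s assume "(x,r) \<in> \<Union>C" "(y,s) \<in> \<Union>C"
        then obtain X Y where XY: "X\<in>C" "Y\<in>C" "(x,r)\<in>X" "(y,s)\<in>Y" by blast
        then have "(x,r) \<in> X \<union> Y" "(y,s) \<in> X \<union> Y" by auto
        moreover have "X \<union> Y \<in> C" using ch XY by (metis sup.absorb1 sup.absorb2)
        ultimately show "(x\<otimes>y, r+s) \<in> \<Union>C" using CA unfolding A_def by blast
      next
        fix x r assume "(x,r) \<in> \<Union>C"
        then obtain X where "X\<in>C" "(x,r)\<in>X" by blast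
        then show "(inv x, -r) \<in> \<Union>C" using CA unfolding A_def by blast
      qed
      then show ?thesis by blast
    qed
  qed
  from Zorn_Lemma2[OF this] obtain M where MA: "M \<in> A" and Mmax: "\<forall>X\<in>A. M \<subseteq> X \<longrightarrow> X = M" by blast
  have Mall: "M \<subseteq> carrier G \<times> UNIV \<and> (\<forall>x r s. (x,r)\<in>M \<longrightarrow> (x,s)\<in>M \<longrightarrow> r = s)
     \<and> (\<forall>x\<in>H. (x, h x) \<in> M) \<and> (\<forall>x r y s. (x,r)\<in>M \<longrightarrow> (y,s)\<in>M \<longrightarrow> (x\<otimes>y, r+s)\<in>M)
     \<and> (\<forall>x r. (x,r)\<in>M \<longrightarrow> (inv x, -r) \<in> M)" using MA unfolding A_def by (rule CollectD)
  have Msub: "M \<subseteq> carrier G \<times> UNIV" using Mall by (rule conjunct1)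
  have Msv: "\<And>x r s. (x,r)\<in>M \<Longrightarrow> (x,s)\<in>M \<Longrightarrow> r = s" using Mall by blast
  have MH: "\<And>x. x\<in>H \<Longrightarrow> (x, h x) \<in> M" using Mall by blast
  have Mmul: "\<And>x r y s. (x,r)\<in>M \<Longrightarrow> (y,s)\<in>M \<Longrightarrow> (x\<otimes>y, r+s)\<in>M" using Mall by blast
  have Minv: "\<And>x r. (x,r)\<in>M \<Longrightarrow> (inv x, -r) \<in> M" using Mall by blast
  have M1: "(\<one>, 0) \<in> M" using MH[OF subgroup.one_closed[OF H]] h1 by simp
  have Mpow_nat: "(y [^] (n::nat), of_nat n * s) \<in> M" if "(y,s) \<in> M" for y s n
  proof (induction n)
    case 0 then show ?case using M1 by simp
  next
    case (Suc n)
    have "(y [^] n \<otimes> y, of_nat n * s + s) \<in> M" using Mmul[OF Suc that] .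
    then show ?case by (simp add: algebra_simps)
  qed
  have Mpow: "(y [^] (n::int), of_int n * s) \<in> M" if "(y,s) \<in> M" for y s n
    by (rule graph_int_pow[OF Mpow_nat Minv that])
  have total: "\<exists>r. (x, r) \<in> M" if xG: "x \<in> carrier G" for x
  proof (rule ccontr)
    assume nx: "\<not> (\<exists>r. (x, r) \<in> M)"
    define t where "t = (if \<exists>j r. j \<noteq> 0 \<and> (x [^] (j::int), r) \<in> M
      then (let j0 = (SOME j. j \<noteq> 0 \<and> (\<exists>r. (x [^] (j::int), r) \<in> M)) in
           (THE r. (x [^] j0, r) \<in> M) / of_int j0) else 0)"
    have K: "r = of_int j * t" if "(x [^] (j::int), r) \<in> M" for j r
    proof (cases "j = 0")
      case True
      then show ?thesis using that M1 Msv by auto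
    next
      case False
      then have ex: "\<exists>j r. j \<noteq> 0 \<and> (x [^] (j::int), r) \<in> M" using that by blast
      define j0 where "j0 = (SOME j. j \<noteq> 0 \<and> (\<exists>r. (x [^] (j::int), r) \<in> M))"
      have j0: "j0 \<noteq> 0 \<and> (\<exists>r. (x [^] (j0::int), r) \<in> M)"
        unfolding j0_def by (rule someI_ex) (use ex in blast)
      then obtain r0 where r0: "(x [^] j0, r0) \<in> M" by blast
      have tr: "t = r0 / of_int j0"
      proof -
        have "(THE r. (x [^] j0, r) \<in> M) = r0" using r0 Msv by blast
        then show ?thesis unfolding t_def using ex by (simp add: j0_def[symmetric] Let_def)
      qed
      have a: "(x [^] (j*j0), of_int j0 * r) \<in> M" using Mpow[OF that, of j0] int_pow_pow[OF xG] by simp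
      have b: "(x [^] (j0*j), of_int j * r0) \<in> M" using Mpow[OF r0, of j] int_pow_pow[OF xG] by simp
      have "of_int j0 * r = of_int j * r0" using Msv[OF a] b by (simp add: mult.commute)
      then have "r * of_int j0 = (of_int j * t) * of_int j0" using tr j0 by (simp add: field_simps)
      then show ?thesis using j0 by simp
    qed
    define M' where "M' = {(k \<otimes> x [^] (n::int), r + of_int n * t) | k r n. (k,r) \<in> M}"
    have kG: "k \<in> carrier G" if "(k,r) \<in> M" for k r using that Msub by blast
    have "M' \<in> A"
      unfolding A_def
    proof (intro CollectI conjI allI impI ballI)
      show "M' \<subseteq> carrier G \<times> UNIV" unfolding M'_def using kG xG by auto
    next
      fix z r s assume "(z,r) \<in> M'" "(z,s) \<in> M'"
      then obtain k r1 n k' r1' n' where e: "(k,r1)\<in>M" "(k',r1')\<in>M" "z = k \<otimes> x [^] n" "r = r1 + of_int n * t"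
        "z = k' \<otimes> x [^] n'" "s = r1' + of_int n' * t" unfolding M'_def by blast
      have kk: "k \<in> carrier G" "k' \<in> carrier G" using e kG by auto
      have "x [^] (n - n') = inv k \<otimes> k'"
      proof -
        have "k \<otimes> x [^] n = k' \<otimes> x [^] n'" using e by simp
        then have "inv k \<otimes> (k \<otimes> x [^] n) \<otimes> inv (x [^] n') = inv k \<otimes> (k' \<otimes> x [^] n') \<otimes> inv (x [^] n')" by simp
        then have "x [^] n = inv k \<otimes> k' \<otimes> x [^] n'" using kk xG by (simp add: m_assoc[symmetric])
        then have "x [^] n \<otimes> inv (x [^] n') = inv k \<otimes> k' \<otimes> x [^] n' \<otimes> inv (x [^] n')" by simp
        also have "\<dots> = inv k \<otimes> k'" using kk xG by (simp add: m_assoc)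
        finally show ?thesis using xG by (simp add: int_pow_diff)
      qed
      moreover have "(inv k \<otimes> k', - r1 + r1') \<in> M" using Mmul[OF Minv[OF e(1)] e(2)] .
      ultimately have "(x [^] (n - n'), - r1 + r1') \<in> M" by simp
      then have "- r1 + r1' = of_int (n - n') * t" by (rule K)
      then show "r = s" using e by (simp add: algebra_simps)
    next
      fix z assume "z \<in> H"
      then have "(z \<otimes> x [^] (0::int), h z + of_int 0 * t) \<in> M'" unfolding M'_def using MH by blast
      then show "(z, h z) \<in> M'" using \<open>z\<in>H\<close> Hsub by auto
    next
      fix z r y s assume "(z,r) \<in> M'" "(y,s) \<in> M'"
      then obtain k r1 n k' r1' n' where e: "(k,r1)\<in>M" "(k',r1')\<in>M" "z = k \<otimes> x [^] n" "r = r1 + of_int n * t"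
        "y = k' \<otimes> x [^] n'" "s = r1' + of_int n' * t" unfolding M'_def by blast
      have kk: "k \<in> carrier G" "k' \<in> carrier G" using e kG by auto
      have "z \<otimes> y = (k \<otimes> k') \<otimes> x [^] (n + n')"
        using e kk xG by (simp add: int_pow_mult m_ac)
      moreover have "r + s = (r1 + r1') + of_int (n + n') * t" using e by (simp add: algebra_simps)
      ultimately show "(z \<otimes> y, r + s) \<in> M'" unfolding M'_def using Mmul[OF e(1,2)] by blast
    next
      fix z r assume "(z,r) \<in> M'"
      then obtain k r1 n where e: "(k,r1)\<in>M" "z = k \<otimes> x [^] n" "r = r1 + of_int n * t"
        unfolding M'_def by blast
      have kk: "k \<in> carrier G" using e kG by auto
      have "inv z = inv k \<otimes> x [^] (- n)"
        using e kk xG by (simp add: int_pow_neg inv_mult)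
      moreover have "- r = - r1 + of_int (- n) * t" using e by simp
      ultimately show "(inv z, - r) \<in> M'" unfolding M'_def using Minv[OF e(1)] by blast
    qed
    moreover have "M \<subseteq> M'"
    proof
      fix p assume "p \<in> M"
      obtain k r where p: "p = (k, r)" by (cases p)
      have "(k \<otimes> x [^] (0::int), r + of_int 0 * t) \<in> M'" unfolding M'_def using \<open>p\<in>M\<close> p by blast
      then show "p \<in> M'" using p kG \<open>p\<in>M\<close> by auto
    qed
    moreover have "(x, t) \<in> M'"
    proof -
      have "(\<one> \<otimes> x [^] (1::int), 0 + of_int 1 * t) \<in> M'" unfolding M'_def using M1 by blast
      then show ?thesis using xG by simp
    qed
    ultimately have "M' = M" using Mmax by blast
    then show False using \<open>(x, t) \<in> M'\<close> nx by blast
  qed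
  define h' where "h' y = (THE r. (y, r) \<in> M)" for y
  have h'eq: "h' y = r" if "(y, r) \<in> M" for y r
    unfolding h'_def using that Msv by (intro the_equality) simp_all
  have h'M: "(y, h' y) \<in> M" if yG: "y \<in> carrier G" for y
  proof -
    obtain r where "(y, r) \<in> M" using total[OF yG] by blast
    then show ?thesis using h'eq by metis
  qed
  show ?thesis
  proof (intro exI conjI ballI)
    fix x assume "x \<in> H" then show "h' x = h x" by (rule h'eq[OF MH])
  next
    fix x y assume "x \<in> carrier G" "y \<in> carrier G"
    then show "h' (x \<otimes> y) = h' x + h' y" by (intro h'eq Mmul h'M)
  qed
qed


lemma cocycle_split:
  fixes U :: "'x set" and mul :: "'x \<Rightarrow> 'x \<Rightarrow> 'x" and e :: 'x and f :: "'x \<Rightarrow> 'x \<Rightarrow> rat"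
  assumes cl: "\<And>a b. a\<in>U \<Longrightarrow> b\<in>U \<Longrightarrow> mul a b \<in> U"
    and ass: "\<And>a b c. a\<in>U \<Longrightarrow> b\<in>U \<Longrightarrow> c\<in>U \<Longrightarrow> mul (mul a b) c = mul a (mul b c)"
    and com: "\<And>a b. a\<in>U \<Longrightarrow> b\<in>U \<Longrightarrow> mul a b = mul b a"
    and eU: "e \<in> U" and el: "\<And>a. a\<in>U \<Longrightarrow> mul e a = a"
    and inv: "\<And>a. a\<in>U \<Longrightarrow> \<exists>b\<in>U. mul b a = e"
    and fsym: "\<And>a b. a\<in>U \<Longrightarrow> b\<in>U \<Longrightarrow> f a b = f b a"
    and fcoc: "\<And>a b c. a\<in>U \<Longrightarrow> b\<in>U \<Longrightarrow> c\<in>U \<Longrightarrow> f a b + f (mul a b) c = f b c + f a (mul b c)"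
    and fe: "\<And>a. a\<in>U \<Longrightarrow> f e a = 0"
  shows "\<exists>g. \<forall>a\<in>U. \<forall>b\<in>U. f a b = g a + g b - g (mul a b)"
proof -
  define E where "E = \<lparr>carrier = (UNIV :: rat set) \<times> U,
     mult = (\<lambda>x y. (fst x + fst y - f (snd x) (snd y), mul (snd x) (snd y))), one = (0, e)\<rparr>"
  have cE: "carrier E = UNIV \<times> U" and mE: "x \<otimes>\<^bsub>E\<^esub> y = (fst x + fst y - f (snd x) (snd y), mul (snd x) (snd y))"
    and oE: "\<one>\<^bsub>E\<^esub> = (0, e)" for x y by (simp_all add: E_def)
  have grp: "comm_group E"
  proof (rule comm_groupI)
    fix x y assume "x \<in> carrier E" "y \<in> carrier E"
    then show "x \<otimes>\<^bsub>E\<^esub> y \<in> carrier E" using cl by (auto simp: cE mE)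
  next
    show "\<one>\<^bsub>E\<^esub> \<in> carrier E" using eU by (simp add: cE oE)
  next
    fix x y z assume "x \<in> carrier E" "y \<in> carrier E" "z \<in> carrier E"
    then show "x \<otimes>\<^bsub>E\<^esub> y \<otimes>\<^bsub>E\<^esub> z = x \<otimes>\<^bsub>E\<^esub> (y \<otimes>\<^bsub>E\<^esub> z)"
      using fcoc[of "snd x" "snd y" "snd z"] ass[of "snd x" "snd y" "snd z"]
      by (auto simp: cE mE algebra_simps)
  next
    fix x y assume "x \<in> carrier E" "y \<in> carrier E"
    then show "x \<otimes>\<^bsub>E\<^esub> y = y \<otimes>\<^bsub>E\<^esub> x" using com fsym by (auto simp: cE mE algebra_simps)
  next
    fix x assume "x \<in> carrier E"
    then show "\<one>\<^bsub>E\<^esub> \<otimes>\<^bsub>E\<^esub> x = x" using el fe by (auto simp: cE mE oE)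
  next
    fix x assume x: "x \<in> carrier E"
    have "snd x \<in> U" using x by (auto simp: cE)
    then obtain b where b: "b \<in> U" "mul b (snd x) = e" using inv by blast
    have "(f b (snd x) - fst x, b) \<otimes>\<^bsub>E\<^esub> x = \<one>\<^bsub>E\<^esub>" using b by (simp add: mE oE)
    moreover have "(f b (snd x) - fst x, b) \<in> carrier E" using b by (simp add: cE)
    ultimately show "\<exists>y\<in>carrier E. y \<otimes>\<^bsub>E\<^esub> x = \<one>\<^bsub>E\<^esub>" by blast
  qed
  interpret E: comm_group E by (rule grp)
  have sub: "subgroup ((UNIV::rat set) \<times> {e}) E"
  proof (rule E.subgroupI)
    show "(UNIV::rat set) \<times> {e} \<subseteq> carrier E" using eU by (auto simp: cE)
    show "(UNIV::rat set) \<times> {e} \<noteq> {}" by simp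
  next
    fix a assume a: "a \<in> (UNIV::rat set) \<times> {e}"
    have "a \<in> carrier E" using a eU by (auto simp: cE)
    then obtain y where y: "y \<in> carrier E" "y \<otimes>\<^bsub>E\<^esub> a = \<one>\<^bsub>E\<^esub>" using E.l_inv_ex by blast
    then have "inv\<^bsub>E\<^esub> a = y" using \<open>a \<in> carrier E\<close> E.inv_equality by blast
    moreover have "snd y = e" using y a el[of "snd y"] com[of "snd y" e] eU by (auto simp: cE mE oE)
    ultimately show "inv\<^bsub>E\<^esub> a \<in> (UNIV::rat set) \<times> {e}" by (metis SigmaI UNIV_I prod.collapse singletonI)
  next
    fix a b assume "a \<in> (UNIV::rat set) \<times> {e}" "b \<in> (UNIV::rat set) \<times> {e}"
    then show "a \<otimes>\<^bsub>E\<^esub> b \<in> (UNIV::rat set) \<times> {e}" using el eU by (auto simp: mE)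
  qed
  have hh: "\<forall>x\<in>(UNIV::rat set) \<times> {e}. \<forall>y\<in>(UNIV::rat set) \<times> {e}. fst (x \<otimes>\<^bsub>E\<^esub> y) = fst x + fst y"
    using fe eU by (auto simp: mE)
  obtain l where l1: "\<forall>x\<in>(UNIV::rat set) \<times> {e}. l x = fst x"
    and l2: "\<forall>x\<in>carrier E. \<forall>y\<in>carrier E. l (x \<otimes>\<^bsub>E\<^esub> y) = l x + l y"
    using E.rat_hom_extend[OF sub hh] by blast
  show ?thesis
  proof (intro exI ballI)
    fix a b assume a: "a \<in> U" and b: "b \<in> U"
    have "(0, a) \<otimes>\<^bsub>E\<^esub> (0, b) = (- f a b, e) \<otimes>\<^bsub>E\<^esub> (0, mul a b)"
      using a b fe[OF cl[OF a b]] el[OF cl[OF a b]] by (simp add: mE)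
    then have "l (0, a) + l (0, b) = l (- f a b, e) + l (0, mul a b)"
      using l2 a b eU cl[OF a b] by (metis SigmaI UNIV_I cE)
    moreover have "l (- f a b, e) = - f a b" using l1 by simp
    ultimately show "f a b = - l (0, a) + - l (0, b) - - l (0, mul a b)" by simp
  qed
qed

definition pp :: "'b set \<Rightarrow> ('b \<Rightarrow> int) \<Rightarrow> 'b::comm_monoid_mult" where
  "pp S m = (\<Prod>x\<in>S. x ^ nat (m x))"
definition nn :: "'b set \<Rightarrow> ('b \<Rightarrow> int) \<Rightarrow> 'b::comm_monoid_mult" where
  "nn S m = (\<Prod>x\<in>S. x ^ nat (- m x))"

lemma nat_arith_id: "nat (u + v) + nat (- u) + nat (- v) = nat (-(u + v)) + nat u + nat (v::int)"
  by linarith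

locale eqctx =
  fixes eq :: "'b::comm_monoid_mult \<Rightarrow> 'b \<Rightarrow> bool" and C :: "'b set"
  assumes eq_refl: "eq x x" and eq_sym: "eq x y \<Longrightarrow> eq y x"
    and eq_trans: "eq x y \<Longrightarrow> eq y z \<Longrightarrow> eq x z"
    and eq_mult: "eq x y \<Longrightarrow> eq (x * z) (y * z)"
    and eq_cancel: "z \<in> C \<Longrightarrow> eq (x * z) (y * z) \<Longrightarrow> eq x y"
    and C_mult: "z \<in> C \<Longrightarrow> z' \<in> C \<Longrightarrow> z * z' \<in> C" and C_1: "1 \<in> C"
begin

definition ev where "ev S m A B \<longleftrightarrow> eq (pp S m * B) (nn S m * A)"

definition tz where "tz S w \<longleftrightarrow> (\<exists>N::nat. N > 0 \<and> (\<forall>g. of_nat N * w g \<in> (\<int> :: rat set))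
   \<and> ev S (\<lambda>g. \<lfloor>of_nat N * w g\<rfloor>) 1 1)"

lemma eq_mult2: "eq x y \<Longrightarrow> eq x' y' \<Longrightarrow> eq (x * x') (y * y')"
proof -
  assume a: "eq x y" and b: "eq x' y'"
  have 1: "eq (x * x') (y * x')" using eq_mult[OF a] .
  have "eq (x' * y) (y' * y)" using eq_mult[OF b] .
  then have 2: "eq (y * x') (y * y')" by (simp add: mult.commute)
  show ?thesis using eq_trans[OF 1 2] .
qed

lemma C_pow: "z \<in> C \<Longrightarrow> z ^ k \<in> C"
  by (induction k) (auto intro: C_mult C_1)

lemma C_prod: "finite S \<Longrightarrow> (\<And>x. x \<in> S \<Longrightarrow> g x \<in> C) \<Longrightarrow> prod g S \<in> C"
  by (induction S rule: finite_induct) (auto intro: C_mult C_1)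

lemma pp_C: "finite S \<Longrightarrow> S \<subseteq> C \<Longrightarrow> pp S m \<in> C"
  unfolding pp_def by (rule C_prod) (auto intro: C_pow)

lemma nn_C: "finite S \<Longrightarrow> S \<subseteq> C \<Longrightarrow> nn S m \<in> C"
  unfolding nn_def by (rule C_prod) (auto intro: C_pow)

lemma ev_add:
  assumes S: "finite S" "S \<subseteq> C" and h1: "ev S m A B" and h2: "ev S m' A' B'"
  shows "ev S (\<lambda>x. m x + m' x) (A * A') (B * B')"
proof -
  define Tp where "Tp = pp S (\<lambda>x. m x + m' x)"
  define Tn where "Tn = nn S (\<lambda>x. m x + m' x)"
  define Xp where "Xp = pp S m"
  define Xn where "Xn = nn S m"
  define Yp where "Yp = pp S m'"
  define Yn where "Yn = nn S m'"
  have id: "Tp * Xn * Yn = Tn * Xp * Yp"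
  proof -
    have "Tp * Xn * Yn = (\<Prod>x\<in>S. x ^ (nat (m x + m' x) + nat (- m x) + nat (- m' x)))"
      unfolding Tp_def Xn_def Yn_def pp_def nn_def by (simp add: prod.distrib[symmetric] power_add)
    also have "\<dots> = (\<Prod>x\<in>S. x ^ (nat (-(m x + m' x)) + nat (m x) + nat (m' x)))"
      by (simp only: nat_arith_id)
    also have "\<dots> = Tn * Xp * Yp"
      unfolding Tn_def Xp_def Yp_def pp_def nn_def by (simp add: prod.distrib[symmetric] power_add)
    finally show ?thesis .
  qed
  have e1: "eq (Xp * B) (Xn * A)" using h1 unfolding ev_def Xp_def Xn_def .
  have e2: "eq (Yp * B') (Yn * A')" using h2 unfolding ev_def Yp_def Yn_def .
  have "eq (Tn * ((Xp * B) * (Yp * B'))) (Tn * ((Xn * A) * (Yn * A')))"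
    by (rule eq_mult2[OF eq_refl eq_mult2[OF e1 e2]])
  moreover have "Tn * ((Xp * B) * (Yp * B')) = (Tn * Xp * Yp) * (B * B')" by (simp add: ac_simps)
  moreover have "(Tn * Xp * Yp) * (B * B') = (Tp * (B * B')) * (Xn * Yn)"
    by (simp only: id[symmetric]) (simp add: ac_simps)
  moreover have "Tn * ((Xn * A) * (Yn * A')) = (Tn * (A * A')) * (Xn * Yn)" by (simp add: ac_simps)
  ultimately have "eq ((Tp * (B * B')) * (Xn * Yn)) ((Tn * (A * A')) * (Xn * Yn))" by simp
  moreover have "Xn * Yn \<in> C" unfolding Xn_def Yn_def by (intro C_mult nn_C S)
  ultimately have "eq (Tp * (B * B')) (Tn * (A * A'))" using eq_cancel by blast
  then show ?thesis unfolding ev_def Tp_def Tn_def .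
qed

lemma ev_neg: "ev S m A B \<Longrightarrow> ev S (\<lambda>x. - m x) B A"
  unfolding ev_def pp_def nn_def by (simp add: eq_sym)

lemma ev_zero: "ev S (\<lambda>x. 0) 1 1"
  unfolding ev_def pp_def nn_def by (simp add: eq_refl)

lemma ev_ext: "(\<And>x. x \<in> S \<Longrightarrow> m x = m' x) \<Longrightarrow> ev S m A B \<longleftrightarrow> ev S m' A B"
  unfolding ev_def pp_def nn_def by (simp cong: prod.cong)

lemma ev_delta:
  assumes "finite S" "a \<in> S"
  shows "ev S (\<lambda>x. if x = a then 1 else 0) a 1"
proof -
  have "pp S (\<lambda>x. if x = a then 1 else 0) = (\<Prod>x\<in>S. if x = a then x else 1)"
    unfolding pp_def by (rule prod.cong) auto
  also have "\<dots> = a" using assms by (simp add: prod.delta)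
  finally have 1: "pp S (\<lambda>x. if x = a then 1 else 0) = a" .
  have 2: "nn S (\<lambda>x. if x = a then 1 else 0) = 1"
    unfolding nn_def by (rule prod.neutral) auto
  show ?thesis unfolding ev_def 1 2 by (simp add: eq_refl)
qed

lemma ev_cong: "ev S m A B \<Longrightarrow> eq A A' \<Longrightarrow> eq B B' \<Longrightarrow> ev S m A' B'"
  unfolding ev_def
proof -
  assume h: "eq (pp S m * B) (nn S m * A)" and a: "eq A A'" and b: "eq B B'"
  have "eq (pp S m * B') (pp S m * B)" by (rule eq_mult2[OF eq_refl eq_sym[OF b]])
  moreover have "eq (nn S m * A) (nn S m * A')" by (rule eq_mult2[OF eq_refl a])
  ultimately show "eq (pp S m * B') (nn S m * A')" using h eq_trans by blast
qed

lemma ev_11: "A \<in> C \<Longrightarrow> ev S m A A \<Longrightarrow> ev S m 1 1"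
  unfolding ev_def using eq_cancel by simp

lemma ev_smult_nat:
  assumes S: "finite S" "S \<subseteq> C" and h: "ev S m 1 1"
  shows "ev S (\<lambda>x. int k * m x) 1 1"
proof (induction k)
  case 0 then show ?case using ev_zero by simp
next
  case (Suc k)
  have "ev S (\<lambda>x. m x + int k * m x) (1 * 1) (1 * 1)" by (rule ev_add[OF S h Suc])
  then show ?case by (simp add: algebra_simps)
qed

lemma ev_smult_int:
  assumes S: "finite S" "S \<subseteq> C" and h: "ev S m 1 1"
  shows "ev S (\<lambda>x. k * m x) 1 1"
proof (cases "k \<ge> 0")
  case True
  then show ?thesis using ev_smult_nat[OF S h, of "nat k"] by simp
next
  case False
  have "ev S (\<lambda>x. - (int (nat (- k)) * m x)) 1 1" by (rule ev_neg[OF ev_smult_nat[OF S h]])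
  then show ?thesis using False by simp
qed

lemma tz_add:
  assumes S: "finite S" "S \<subseteq> C" and h1: "tz S w" and h2: "tz S w'"
  shows "tz S (\<lambda>g. w g + w' g)"
proof -
  obtain N1 where N1: "N1 > 0" "\<forall>g. of_nat N1 * w g \<in> (\<int> :: rat set)" "ev S (\<lambda>g. \<lfloor>of_nat N1 * w g\<rfloor>) 1 1"
    using h1 unfolding tz_def by blast
  obtain N2 where N2: "N2 > 0" "\<forall>g. of_nat N2 * w' g \<in> (\<int> :: rat set)" "ev S (\<lambda>g. \<lfloor>of_nat N2 * w' g\<rfloor>) 1 1"
    using h2 unfolding tz_def by blast
  have key: "of_nat (N1 * N2) * (w g + w' g) = of_int (int N2 * \<lfloor>of_nat N1 * w g\<rfloor> + int N1 * \<lfloor>of_nat N2 * w' g\<rfloor>)" for g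
  proof -
    obtain k1 where k1: "of_nat N1 * w g = (of_int k1 :: rat)" using N1(2) Ints_cases by metis
    obtain k2 where k2: "of_nat N2 * w' g = (of_int k2 :: rat)" using N2(2) Ints_cases by metis
    have "of_nat (N1 * N2) * (w g + w' g) = of_nat N2 * (of_nat N1 * w g) + of_nat N1 * (of_nat N2 * w' g)"
      by (simp add: algebra_simps)
    also have "\<dots> = of_int (int N2 * k1 + int N1 * k2)" unfolding k1 k2 by simp
    finally show ?thesis unfolding k1 k2 by simp
  qed
  have "ev S (\<lambda>x. int N2 * \<lfloor>of_nat N1 * w x\<rfloor> + int N1 * \<lfloor>of_nat N2 * w' x\<rfloor>) (1 * 1) (1 * 1)"
    by (rule ev_add[OF S ev_smult_int[OF S N1(3)] ev_smult_int[OF S N2(3)]])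
  then have "ev S (\<lambda>g. \<lfloor>of_nat (N1 * N2) * (w g + w' g)\<rfloor>) 1 1"
    unfolding key floor_of_int by simp
  moreover have "\<forall>g. of_nat (N1 * N2) * (w g + w' g) \<in> (\<int> :: rat set)" unfolding key by simp
  moreover have "N1 * N2 > 0" using N1 N2 by simp
  ultimately show ?thesis unfolding tz_def by blast
qed

lemma tz_scale:
  assumes S: "finite S" "S \<subseteq> C" and h: "tz S w"
  shows "tz S (\<lambda>g. r * w g)"
proof -
  obtain N where N: "N > 0" "\<forall>g. of_nat N * w g \<in> (\<int> :: rat set)" "ev S (\<lambda>g. \<lfloor>of_nat N * w g\<rfloor>) 1 1"
    using h unfolding tz_def by blast
  obtain p q where pq: "quotient_of r = (p, q)" by (cases "quotient_of r")
  have q: "q > 0" using quotient_of_denom_pos[OF pq] .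
  have r: "r = of_int p / of_int q" using quotient_of_div[OF pq] .
  have key: "of_nat (N * nat q) * (r * w g) = of_int (p * \<lfloor>of_nat N * w g\<rfloor>)" for g
  proof -
    obtain k where k: "of_nat N * w g = (of_int k :: rat)" using N(2) Ints_cases by metis
    have "of_nat (N * nat q) * (r * w g) = of_int q * r * (of_nat N * w g)" using q by simp
    also have "of_int q * r = of_int p" using q unfolding r by simp
    finally show ?thesis unfolding k by simp
  qed
  have "ev S (\<lambda>x. p * \<lfloor>of_nat N * w x\<rfloor>) 1 1" by (rule ev_smult_int[OF S N(3)])
  then have "ev S (\<lambda>g. \<lfloor>of_nat (N * nat q) * (r * w g)\<rfloor>) 1 1" unfolding key floor_of_int .
  moreover have "\<forall>g. of_nat (N * nat q) * (r * w g) \<in> (\<int> :: rat set)" unfolding key by simp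
  moreover have "N * nat q > 0" using N q by simp
  ultimately show ?thesis unfolding tz_def by blast
qed

lemma tz_zero: "tz S (\<lambda>g. 0)"
  unfolding tz_def using ev_zero by (intro exI[of _ 1]) simp

lemma tz_sum:
  assumes S: "finite S" "S \<subseteq> C" and I: "finite I" and h: "\<And>i. i \<in> I \<Longrightarrow> tz S (w i)"
  shows "tz S (\<lambda>g. \<Sum>i\<in>I. c i * w i g)"
  using I h
proof (induction I rule: finite_induct)
  case empty then show ?case using tz_zero by simp
next
  case (insert i I)
  have "tz S (\<lambda>g. c i * w i g + (\<Sum>i\<in>I. c i * w i g))"
    by (rule tz_add[OF S tz_scale[OF S insert.prems] insert.IH]) (use insert in auto)
  then show ?case using insert by simp
qed

lemma tz_iff:
  assumes S: "finite S" and sup: "{g. w g \<noteq> 0} \<subseteq> S"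
  shows "tensorQ_zero eq w \<longleftrightarrow> tz S w"
proof -
  have pos: "(\<Prod>g\<in>{g. 0 < w g}. g ^ nat \<lfloor>of_nat N * w g\<rfloor>) = pp S (\<lambda>g. \<lfloor>of_nat N * w g\<rfloor>)"
    if "N > 0" for N :: nat
    unfolding pp_def
  proof (rule prod.mono_neutral_left[OF S])
    show "{g. 0 < w g} \<subseteq> S" using sup by auto
    show "\<forall>i\<in>S - {g. 0 < w g}. i ^ nat \<lfloor>of_nat N * w i\<rfloor> = 1"
    proof
      fix i assume "i \<in> S - {g. 0 < w g}"
      then have "w i \<le> 0" by auto
      then have "of_nat N * w i \<le> 0" by (simp add: mult_nonneg_nonpos)
      then show "i ^ nat \<lfloor>of_nat N * w i\<rfloor> = 1" by simp
    qed
  qed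
  have neg: "(\<Prod>g\<in>{g. w g < 0}. g ^ nat \<lfloor>- (of_nat N * w g)\<rfloor>) = nn S (\<lambda>g. \<lfloor>of_nat N * w g\<rfloor>)"
    if N0: "N > 0" and NI: "\<forall>g. of_nat N * w g \<in> (\<int> :: rat set)" for N :: nat
  proof -
    have fl: "\<lfloor>- (of_nat N * w g)\<rfloor> = - \<lfloor>of_nat N * w g\<rfloor>" for g
    proof -
      obtain k where k: "of_nat N * w g = (of_int k :: rat)" using NI Ints_cases by metis
      show ?thesis unfolding k by (metis floor_of_int of_int_minus)
    qed
    show ?thesis
      unfolding nn_def fl[symmetric]
    proof (rule prod.mono_neutral_left[OF S])
      show "{g. w g < 0} \<subseteq> S" using sup by auto
      show "\<forall>i\<in>S - {g. w g < 0}. i ^ nat \<lfloor>- (of_nat N * w i)\<rfloor> = 1"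
      proof
        fix i assume "i \<in> S - {g. w g < 0}"
        then have "w i \<ge> 0" by auto
        then have "- (of_nat N * w i) \<le> 0" by simp
        then show "i ^ nat \<lfloor>- (of_nat N * w i)\<rfloor> = 1" by simp
      qed
    qed
  qed
  show ?thesis
    unfolding tensorQ_zero_def tz_def ev_def
    using pos neg by auto
qed

end

lemma eqctx_eq: "eqctx ((=) :: 'a::field poly \<Rightarrow> 'a poly \<Rightarrow> bool) {z. z \<noteq> 0}"
  by unfold_locales auto

definition yi :: "'x \<Rightarrow> 'x \<Rightarrow> 'x \<Rightarrow> 'x \<Rightarrow> int" where
  "yi a b c f = (if f = a then 1 else 0) + (if f = b then 1 else 0) - (if f = c then 1 else 0)"

lemma (in eqctx) ev_yi:
  assumes S: "finite S" "S \<subseteq> C" and abc: "a \<in> S" "b \<in> S" "c \<in> S" and e: "eq (a * b) c"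
  shows "ev S (yi a b c) 1 1"
proof -
  have "ev S (\<lambda>x. ((if x = a then 1 else 0) + (if x = b then 1 else 0)) + - (if x = c then 1 else 0)) ((a * b) * 1) ((1 * 1) * c)"
    by (intro ev_add ev_neg ev_delta S abc)
  then have "ev S (yi a b c) ((a * b) * 1) ((1 * 1) * c)"
    by (subst ev_ext[where m' = "\<lambda>x. ((if x = a then 1 else 0) + (if x = b then 1 else 0)) + - (if x = c then 1 else 0)"])
       (simp_all add: yi_def)
  then have "ev S (yi a b c) c c" by (rule ev_cong) (use e in \<open>simp_all add: eq_refl\<close>)
  moreover have "c \<in> C" using S abc by auto
  ultimately show ?thesis using ev_11 by blast
qed

lemma (in eqctx) tz_yi:
  assumes S: "finite S" "S \<subseteq> C" and abc: "a \<in> S" "b \<in> S" "c \<in> S" and e: "eq (a * b) c"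
  shows "tz S (\<lambda>f. of_int (yi a b c f))"
  unfolding tz_def
  by (intro exI[of _ 1]) (simp add: ev_yi[OF assms])

lemma yimg_yi: "yimg P a b f = of_int (yi a b (a * b mod P) f)"
  by (simp add: yimg_def yi_def)

lemma Phi_eq:
  assumes "finite T" "{p. c p \<noteq> 0} \<subseteq> T"
  shows "Phi P c f = (\<Sum>p\<in>T. c p * yimg P (fst p) (snd p) f)"
  unfolding Phi_def by (rule sum.mono_neutral_left) (use assms in auto)

locale pctx =
  fixes P :: "'a::field poly"
  assumes irr: "irreducible P" and degP: "degree P \<ge> 1"
begin

lemma P0: "P \<noteq> 0" using degP by auto

lemma primeP: "prime_elem P" using irr by (rule field_poly_irreducible_imp_prime)

lemma U_iff: "a \<in> units_rep P \<longleftrightarrow> a \<noteq> 0 \<and> degree a < degree P"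
  by (simp add: units_rep_def)

lemma U_ndvd: "a \<in> units_rep P \<Longrightarrow> \<not> P dvd a"
proof
  assume a: "a \<in> units_rep P" and d: "P dvd a"
  have "degree P \<le> degree a" using dvd_imp_degree_le[OF d] a by (simp add: U_iff)
  then show False using a by (simp add: U_iff)
qed

lemma U_mod: "a \<in> units_rep P \<Longrightarrow> a mod P = a"
  by (simp add: U_iff mod_poly_less)

lemma one_U: "1 \<in> units_rep P"
  using degP by (simp add: U_iff)

lemma ndvd_mult: "\<not> P dvd a \<Longrightarrow> \<not> P dvd b \<Longrightarrow> \<not> P dvd a * b"
  using primeP prime_elem_dvd_mult_iff by blast

lemma mod_U: "\<not> P dvd a \<Longrightarrow> a mod P \<in> units_rep P"
  using P0 degree_mod_less' by (auto simp: U_iff mod_eq_0_iff_dvd)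

lemma mul_U: "a \<in> units_rep P \<Longrightarrow> b \<in> units_rep P \<Longrightarrow> a * b mod P \<in> units_rep P"
  by (intro mod_U ndvd_mult U_ndvd)

lemma mul_assoc: "(a * b mod P) * c mod P = a * (b * c mod P) mod P"
  by (simp add: mod_mult_left_eq mod_mult_right_eq mult.assoc)

lemma bezoutP:
  assumes a: "a \<noteq> 0" "\<not> P dvd a"
  shows "\<exists>u v. u * a + v * P = 1"
proof -
  define I where "I = {x. \<exists>u v. x = u * a + v * P}"
  have aI: "a \<in> I" unfolding I_def by (rule CollectI, rule exI[of _ 1], rule exI[of _ 0]) simp
  have ex: "\<exists>n. \<exists>g\<in>I. g \<noteq> 0 \<and> degree g = n" using aI a by blast
  define n where "n = (LEAST n. \<exists>g\<in>I. g \<noteq> 0 \<and> degree g = n)"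
  obtain g where g: "g \<in> I" "g \<noteq> 0" "degree g = n"
    using LeastI_ex[OF ex] unfolding n_def by blast
  have minim: "degree x \<ge> n" if "x \<in> I" "x \<noteq> 0" for x
    unfolding n_def using that by (intro Least_le) blast
  have gdvd: "g dvd x" if xI: "x \<in> I" for x
  proof -
    obtain u v where x: "x = u * a + v * P" using xI unfolding I_def by blast
    obtain u' v' where g': "g = u' * a + v' * P" using g(1) unfolding I_def by blast
    have "x mod g = x - (x div g) * g" by (simp add: minus_div_mult_eq_mod)
    also have "\<dots> = (u - (x div g) * u') * a + (v - (x div g) * v') * P"
      unfolding x by (subst g') (simp add: algebra_simps)
    finally have "x mod g \<in> I" unfolding I_def by blast
    moreover have "x mod g = 0 \<or> degree (x mod g) < degree g" using degree_mod_less[OF g(2)] .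
    ultimately have "x mod g = 0" using minim g(3) by force
    then show ?thesis by (simp add: mod_eq_0_iff_dvd)
  qed
  have PI: "P \<in> I" unfolding I_def by (rule CollectI, rule exI[of _ 0], rule exI[of _ 1]) simp
  obtain h where h: "P = g * h" using gdvd[OF PI] by (auto elim: dvdE)
  have "is_unit g \<or> is_unit h" using irreducibleD[OF irr h] .
  moreover have "\<not> is_unit h"
  proof
    assume "is_unit h"
    then have "P dvd g" using h by (metis dvd_mult_unit_iff dvd_refl)
    then have "P dvd a" using gdvd[OF aI] dvd_trans by blast
    then show False using a by simp
  qed
  ultimately have "is_unit g" by blast
  then obtain k where k: "1 = g * k" by (auto elim: dvdE)
  obtain u v where "g = u * a + v * P" using g(1) unfolding I_def by blast
  then have "(k * u) * a + (k * v) * P = 1" using k by (simp add: algebra_simps)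
  then show ?thesis by blast
qed

lemma mul_inv: "a \<in> units_rep P \<Longrightarrow> \<exists>b\<in>units_rep P. b * a mod P = 1"
proof -
  assume a: "a \<in> units_rep P"
  have "a \<noteq> 0" using a by (simp add: U_iff)
  then obtain u v where uv: "u * a + v * P = 1" using bezoutP U_ndvd[OF a] by blast
  have 1: "(1::'a poly) mod P = 1" using degP by (simp add: mod_poly_less)
  have "(u mod P) * a mod P = u * a mod P" by (simp add: mod_mult_left_eq)
  also have "u * a = 1 - v * P" using uv by (simp add: algebra_simps)
  also have "(1 - v * P) mod P = 1" using 1 by (simp add: mod_diff_eq[symmetric])
  finally have e: "(u mod P) * a mod P = 1" .
  have "\<not> P dvd u mod P"
  proof
    assume "P dvd u mod P"
    then have "u mod P = 0" by (metis dvd_mod_iff mod_mod_trivial mod_eq_0_iff_dvd)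
    then show False using e 1 by simp
  qed
  then have "u mod P mod P \<in> units_rep P" using mod_U by blast
  then have "u mod P \<in> units_rep P" by simp
  then show ?thesis using e by blast
qed

lemma eqctx_P: "eqctx (\<lambda>x y. x mod P = y mod P) {z. \<not> P dvd z}"
proof
  fix x y z :: "'a poly"
  show "x mod P = y mod P \<Longrightarrow> x * z mod P = y * z mod P" by (metis mod_mult_left_eq)
  show "z \<in> {z. \<not> P dvd z} \<Longrightarrow> x * z mod P = y * z mod P \<Longrightarrow> x mod P = y mod P"
  proof -
    assume z: "z \<in> {z. \<not> P dvd z}" and h: "x * z mod P = y * z mod P"
    then have "P dvd (x - y) * z" by (simp add: mod_eq_dvd_iff algebra_simps)
    then have "P dvd x - y" using z primeP prime_elem_dvd_mult_iff by auto
    then show ?thesis by (simp add: mod_eq_dvd_iff)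
  qed
qed (auto simp: ndvd_mult primeP prime_elem_not_unit)

definition supS :: "('a poly \<times> 'a poly \<Rightarrow> rat) \<Rightarrow> 'a poly set" where
  "supS c = (\<Union>p\<in>{p. c p \<noteq> 0}. {fst p, snd p, fst p * snd p mod P})"

lemma supS_fin: "fin_supp c \<Longrightarrow> finite (supS c)"
  unfolding supS_def fin_supp_def by auto

lemma supS_U: "{p. c p \<noteq> 0} \<subseteq> units_rep P \<times> units_rep P \<Longrightarrow> supS c \<subseteq> units_rep P"
  unfolding supS_def using mul_U by fastforce

lemma Phi_supp: "fin_supp c \<Longrightarrow> {f. Phi P c f \<noteq> 0} \<subseteq> supS c"
proof
  fix f assume fs: "fin_supp c" and "f \<in> {f. Phi P c f \<noteq> 0}"
  then have "(\<Sum>p\<in>{p. c p \<noteq> 0}. c p * yimg P (fst p) (snd p) f) \<noteq> 0" by (simp add: Phi_def)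
  then obtain p where p: "c p \<noteq> 0" "yimg P (fst p) (snd p) f \<noteq> 0"
    by (metis (mono_tags, lifting) mem_Collect_eq mult_zero_right sum.neutral)
  then have "f \<in> {fst p, snd p, fst p * snd p mod P}" by (auto simp: yimg_def split: if_splits)
  then show "f \<in> supS c" using p unfolding supS_def by blast
qed

lemma part1:
  assumes c: "c \<in> freeY P"
  shows "Phi P c \<in> Vspace P \<and> sP_zero P (Phi P c)"
proof
  have fs: "fin_supp c" and cs: "{p. c p \<noteq> 0} \<subseteq> units_rep P \<times> units_rep P" using c by (auto simp: freeY_def)
  have Sfin: "finite (supS c)" by (rule supS_fin[OF fs])
  have SU: "supS c \<subseteq> units_rep P" by (rule supS_U[OF cs])
  show "Phi P c \<in> Vspace P"
    unfolding Vspace_def fin_supp_def using Phi_supp[OF fs] Sfin SU finite_subset by blast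
  interpret E: eqctx "\<lambda>x y. x mod P = y mod P" "{z. \<not> P dvd z}" by (rule eqctx_P)
  have SC: "supS c \<subseteq> {z. \<not> P dvd z}" using SU U_ndvd by auto
  have T: "finite {p. c p \<noteq> 0}" using fs by (simp add: fin_supp_def)
  have "E.tz (supS c) (\<lambda>f. \<Sum>p\<in>{p. c p \<noteq> 0}. c p * (\<lambda>f. of_int (yi (fst p) (snd p) (fst p * snd p mod P) f)) f)"
  proof (rule E.tz_sum[OF Sfin SC T])
    fix p assume p: "p \<in> {p. c p \<noteq> 0}"
    show "E.tz (supS c) (\<lambda>f. of_int (yi (fst p) (snd p) (fst p * snd p mod P) f))"
    proof -
      have sub: "{fst p, snd p, fst p * snd p mod P} \<subseteq> supS c" using p unfolding supS_def by blast
      show ?thesis by (rule E.tz_yi[OF Sfin SC]) (use sub in auto)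
    qed
  qed
  then have "E.tz (supS c) (Phi P c)" unfolding Phi_def yimg_yi .
  then show "sP_zero P (Phi P c)"
    unfolding sP_zero_def using E.tz_iff[OF Sfin Phi_supp[OF fs]] by simp
qed

end

lemma fin_supp_ygen: "fin_supp (ygen a b)"
  unfolding fin_supp_def ygen_def by (rule finite_subset[of _ "{(a,b)}"]) auto

lemma fin_supp_add: "fin_supp c1 \<Longrightarrow> fin_supp c2 \<Longrightarrow> fin_supp (\<lambda>q. c1 q + c2 q)"
  unfolding fin_supp_def by (rule finite_subset[of _ "{q. c1 q \<noteq> 0} \<union> {q. c2 q \<noteq> 0}"]) auto

lemma fin_supp_diff: "fin_supp c1 \<Longrightarrow> fin_supp c2 \<Longrightarrow> fin_supp (\<lambda>q. c1 q - c2 q)"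
  unfolding fin_supp_def by (rule finite_subset[of _ "{q. c1 q \<noteq> 0} \<union> {q. c2 q \<noteq> 0}"]) auto

lemma fin_supp_lin2: "fin_supp c1 \<Longrightarrow> fin_supp c2 \<Longrightarrow> fin_supp (\<lambda>q. r1 * c1 q + r2 * c2 q)"
  unfolding fin_supp_def by (rule finite_subset[of _ "{q. c1 q \<noteq> 0} \<union> {q. c2 q \<noteq> 0}"]) auto

lemma Phi_lin2:
  assumes "fin_supp c1" "fin_supp c2"
  shows "Phi P (\<lambda>q. r1 * c1 q + r2 * c2 q) f = r1 * Phi P c1 f + r2 * Phi P c2 f"
proof -
  define T where "T = {q. c1 q \<noteq> 0} \<union> {q. c2 q \<noteq> 0}"
  have T: "finite T" using assms unfolding T_def fin_supp_def by auto
  have "Phi P (\<lambda>q. r1 * c1 q + r2 * c2 q) f = (\<Sum>p\<in>T. (r1 * c1 p + r2 * c2 p) * yimg P (fst p) (snd p) f)"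
    by (rule Phi_eq[OF T]) (auto simp: T_def)
  also have "\<dots> = r1 * (\<Sum>p\<in>T. c1 p * yimg P (fst p) (snd p) f) + r2 * (\<Sum>p\<in>T. c2 p * yimg P (fst p) (snd p) f)"
    by (simp add: sum.distrib sum_distrib_left algebra_simps)
  also have "\<dots> = r1 * Phi P c1 f + r2 * Phi P c2 f"
    by (subst (1 2) Phi_eq[OF T]) (auto simp: T_def)
  finally show ?thesis .
qed

lemma Phi_add: "fin_supp c1 \<Longrightarrow> fin_supp c2 \<Longrightarrow> Phi P (\<lambda>q. c1 q + c2 q) f = Phi P c1 f + Phi P c2 f"
  using Phi_lin2[of c1 c2 P 1 1 f] by simp

lemma Phi_diff: "fin_supp c1 \<Longrightarrow> fin_supp c2 \<Longrightarrow> Phi P (\<lambda>q. c1 q - c2 q) f = Phi P c1 f - Phi P c2 f"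
  using Phi_lin2[of c1 c2 P 1 "-1" f] by simp

lemma Phi_ygen: "Phi P (ygen a b) f = yimg P a b f"
  by (subst Phi_eq[of "{(a,b)}"]) (auto simp: ygen_def)

lemma Phi_zero: "Phi P (\<lambda>q. 0) f = 0"
  by (simp add: Phi_def)

lemma Phi_lin_sum:
  assumes T: "finite T" and fs: "\<And>r. r \<in> T \<Longrightarrow> fin_supp r"
  shows "Phi P (\<lambda>p. \<Sum>r\<in>T. u r * r p) f = (\<Sum>r\<in>T. u r * Phi P r f)"
proof -
  define Q where "Q = (\<Union>r\<in>T. {p. r p \<noteq> 0})"
  have Q: "finite Q" using T fs unfolding Q_def fin_supp_def by auto
  have "Phi P (\<lambda>p. \<Sum>r\<in>T. u r * r p) f = (\<Sum>p\<in>Q. (\<Sum>r\<in>T. u r * r p) * yimg P (fst p) (snd p) f)"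
  proof (rule Phi_eq[OF Q])
    show "{p. (\<Sum>r\<in>T. u r * r p) \<noteq> 0} \<subseteq> Q"
    proof
      fix p assume "p \<in> {p. (\<Sum>r\<in>T. u r * r p) \<noteq> 0}"
      then obtain r where "r \<in> T" "u r * r p \<noteq> 0"
        by (metis (mono_tags, lifting) mem_Collect_eq sum.neutral)
      then show "p \<in> Q" unfolding Q_def by auto
    qed
  qed
  also have "\<dots> = (\<Sum>r\<in>T. u r * (\<Sum>p\<in>Q. r p * yimg P (fst p) (snd p) f))"
    by (simp add: sum_distrib_right sum_distrib_left mult.assoc) (rule sum.swap)
  also have "\<dots> = (\<Sum>r\<in>T. u r * Phi P r f)"
  proof (rule sum.cong[OF refl])
    fix r assume "r \<in> T"
    then have "Phi P r f = (\<Sum>p\<in>Q. r p * yimg P (fst p) (snd p) f)"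
      by (intro Phi_eq Q) (auto simp: Q_def)
    then show "u r * (\<Sum>p\<in>Q. r p * yimg P (fst p) (snd p) f) = u r * Phi P r f" by simp
  qed
  finally show ?thesis .
qed

primrec chain :: "'a::field poly \<Rightarrow> 'a poly \<Rightarrow> 'a poly list \<Rightarrow> ('a poly \<times> 'a poly \<Rightarrow> rat)" where
  "chain P p [] = (\<lambda>q. 0)"
| "chain P p (x # xs) = (\<lambda>q. ygen p x q + chain P (p * x mod P) xs q)"

lemma fin_supp_chain: "fin_supp (chain P p xs)"
proof (induction xs arbitrary: p)
  case Nil then show ?case by (simp add: fin_supp_def)
next
  case (Cons x xs) then show ?case by (simp add: fin_supp_add fin_supp_ygen)
qed

context pctx
begin

lemma chain_supp: "p \<in> units_rep P \<Longrightarrow> set xs \<subseteq> units_rep P \<Longrightarrow>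
   {q. chain P p xs q \<noteq> 0} \<subseteq> units_rep P \<times> units_rep P"
proof (induction xs arbitrary: p)
  case Nil then show ?case by simp
next
  case (Cons x xs)
  have "{q. chain P (p * x mod P) xs q \<noteq> 0} \<subseteq> units_rep P \<times> units_rep P"
    using Cons mul_U by auto
  then show ?case using Cons by (auto simp: ygen_def split: if_splits)
qed

lemma Phi_chain:
  "p \<in> units_rep P \<Longrightarrow> set xs \<subseteq> units_rep P \<Longrightarrow> Phi P (chain P p xs) f = (if f = p then 1 else 0) + of_nat (count (mset xs) f)
     - (if f = (p * prod_list xs) mod P then 1 else 0)"
proof (induction xs arbitrary: p)
  case Nil
  then show ?case by (simp add: Phi_def U_mod)
next
  case (Cons x xs)
  have "Phi P (chain P p (x # xs)) f = yimg P p x f + Phi P (chain P (p * x mod P) xs) f"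
    by (simp add: Phi_add fin_supp_ygen fin_supp_chain Phi_ygen)
  also have "(p * x mod P) * prod_list xs mod P = (p * prod_list (x # xs)) mod P"
    by (simp add: mod_mult_left_eq mult.assoc)
  moreover have "p * x mod P \<in> units_rep P" using Cons.prems mul_U by simp
  ultimately show ?case using Cons.IH[of "p * x mod P"] Cons.prems by (simp add: yimg_def)
qed

lemma part3:
  assumes w: "w \<in> Vspace P" and sw: "sP_zero P w"
  shows "\<exists>c\<in>freeY P. zero_FtQ (\<lambda>f. Phi P c f - w f)"
proof -
  interpret E: eqctx "\<lambda>x y. x mod P = y mod P" "{z. \<not> P dvd z}" by (rule eqctx_P)
  define S where "S = {f. w f \<noteq> 0}"
  have Sfin: "finite S" and SU: "S \<subseteq> units_rep P" using w unfolding Vspace_def fin_supp_def S_def by auto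
  have "E.tz S w" using sw E.tz_iff[OF Sfin] unfolding sP_zero_def S_def by simp
  then obtain N :: nat where N: "N > 0" "\<forall>g. of_nat N * w g \<in> (\<int> :: rat set)"
    and ev: "E.ev S (\<lambda>g. \<lfloor>of_nat N * w g\<rfloor>) 1 1" unfolding E.tz_def by blast
  define m where "m g = \<lfloor>of_nat N * w g\<rfloor>" for g
  have mN: "of_int (m g) = of_nat N * w g" for g
    unfolding m_def using N(2) by (metis Ints_cases floor_of_int)
  have m0: "m g = 0" if "g \<notin> S" for g using that unfolding m_def S_def by simp
  have ppnn: "pp S m mod P = nn S m mod P" using ev unfolding E.ev_def m_def by simp
  define Xp where "Xp = (\<Sum>x\<in>S. replicate_mset (nat (m x)) x)"
  define Xn where "Xn = (\<Sum>x\<in>S. replicate_mset (nat (- m x)) x)"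
  have cnt: "count (\<Sum>x\<in>S. replicate_mset (k x) x) f = (if f \<in> S then k f else 0)" for k :: "'a poly \<Rightarrow> nat" and f
    using Sfin by (induction S rule: finite_induct) auto
  have prm: "prod_mset (\<Sum>x\<in>S. replicate_mset (k x) x) = (\<Prod>x\<in>S. x ^ k x)" for k :: "'a poly \<Rightarrow> nat"
    using Sfin by (induction S rule: finite_induct) auto
  have setm: "set_mset (\<Sum>x\<in>S. replicate_mset (k x) x) \<subseteq> S" for k :: "'a poly \<Rightarrow> nat"
  proof
    fix x assume "x \<in># (\<Sum>x\<in>S. replicate_mset (k x) x)"
    then have "count (\<Sum>x\<in>S. replicate_mset (k x) x) x \<noteq> 0" by simp
    then show "x \<in> S" using cnt[of k x] by (simp split: if_splits)
  qed
  obtain xs where xs: "mset xs = Xp" using ex_mset by blast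
  obtain ys where ys: "mset ys = Xn" using ex_mset by blast
  have xsU: "set xs \<subseteq> units_rep P" using setm xs SU unfolding Xp_def by (metis set_mset_mset subset_trans)
  have ysU: "set ys \<subseteq> units_rep P" using setm ys SU unfolding Xn_def by (metis set_mset_mset subset_trans)
  have px: "prod_list xs = pp S m" using xs prm unfolding Xp_def pp_def by (metis prod_mset_prod_list)
  have py: "prod_list ys = nn S m" using ys prm unfolding Xn_def nn_def by (metis prod_mset_prod_list)
  define c where "c = (\<lambda>q. (1 / of_nat N) * chain P 1 xs q + (- 1 / of_nat N) * chain P 1 ys q)"
  have Phic: "Phi P c f = w f" for f
  proof -
    have "Phi P c f = (1 / of_nat N) * Phi P (chain P 1 xs) f + (- 1 / of_nat N) * Phi P (chain P 1 ys) f"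
      unfolding c_def by (rule Phi_lin2[OF fin_supp_chain fin_supp_chain])
    also have "\<dots> = (1 / of_nat N) * (of_nat (count Xp f) - of_nat (count Xn f))"
      unfolding Phi_chain[OF one_U xsU] Phi_chain[OF one_U ysU] xs ys using ppnn px py by (simp add: algebra_simps)
    also have "of_nat (count Xp f) - of_nat (count Xn f) = (of_int (m f) :: rat)"
      unfolding Xp_def Xn_def cnt using m0 by auto
    finally show ?thesis using mN N(1) by simp
  qed
  have "c \<in> freeY P"
  proof -
    have "fin_supp c" unfolding c_def by (intro fin_supp_lin2 fin_supp_chain)
    moreover have "{q. c q \<noteq> 0} \<subseteq> units_rep P \<times> units_rep P"
    proof -
      have "{q. c q \<noteq> 0} \<subseteq> {q. chain P 1 xs q \<noteq> 0} \<union> {q. chain P 1 ys q \<noteq> 0}"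
        unfolding c_def by auto
      then show ?thesis using chain_supp[OF one_U xsU] chain_supp[OF one_U ysU] by blast
    qed
    ultimately show ?thesis unfolding freeY_def by simp
  qed
  moreover have "zero_FtQ (\<lambda>f. Phi P c f - w f)"
    unfolding zero_FtQ_def tensorQ_zero_def Phic by (intro exI[of _ 1]) simp
  ultimately show ?thesis by blast
qed

lemma part2_rev:
  assumes c: "c \<in> qspan (rels P)"
  shows "zero_FtQ (Phi P c)"
proof -
  interpret E: eqctx "(=) :: 'a poly \<Rightarrow> 'a poly \<Rightarrow> bool" "{z. z \<noteq> 0}" by (rule eqctx_eq)
  obtain T u where T: "finite T" "T \<subseteq> rels P" and ce: "c = (\<lambda>p. \<Sum>r\<in>T. u r * r p)"
    using c unfolding qspan_def by blast
  have relfs: "fin_supp r \<and> {p. r p \<noteq> 0} \<subseteq> units_rep P \<times> units_rep P" if "r \<in> rels P" for r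
  proof -
    have U2: "{p. ygen a b p \<noteq> 0} \<subseteq> units_rep P \<times> units_rep P" if "a \<in> units_rep P" "b \<in> units_rep P" for a b
      using that by (auto simp: ygen_def split: if_splits)
    from \<open>r \<in> rels P\<close> show ?thesis
      unfolding rels_def
    proof (elim UnE CollectE exE conjE)
      fix a b assume r: "r = ygen a b" and ab: "a \<in> units_rep P" "b \<in> units_rep P"
      show ?thesis unfolding r using U2[OF ab] fin_supp_ygen[of a b] by simp
    next
      fix a b assume r: "r = (\<lambda>q. ygen a b q - ygen b a q)" and ab: "a \<in> units_rep P" "b \<in> units_rep P"
      have "fin_supp r" unfolding r by (intro fin_supp_diff fin_supp_ygen)
      moreover have "{p. r p \<noteq> 0} \<subseteq> {p. ygen a b p \<noteq> 0} \<union> {p. ygen b a p \<noteq> 0}" unfolding r by auto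
      ultimately show ?thesis using U2[OF ab] U2[OF ab(2,1)] by blast
    next
      fix a b c assume r: "r = (\<lambda>q. ygen a b q + ygen (a * b mod P) c q - ygen a c q - ygen (a * c mod P) b q)"
        and abc: "a \<in> units_rep P" "b \<in> units_rep P" "c \<in> units_rep P"
      have "fin_supp r" unfolding r by (intro fin_supp_add fin_supp_diff fin_supp_ygen)
      moreover have "{p. r p \<noteq> 0} \<subseteq> {p. ygen a b p \<noteq> 0} \<union> {p. ygen (a * b mod P) c p \<noteq> 0}
          \<union> {p. ygen a c p \<noteq> 0} \<union> {p. ygen (a * c mod P) b p \<noteq> 0}" unfolding r by auto
      moreover have "a * b mod P \<in> units_rep P" "a * c mod P \<in> units_rep P" using abc mul_U by auto
      ultimately show ?thesis using U2[of a b] U2[of "a * b mod P" c] U2[of a c] U2[of "a * c mod P" b] abc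
        by blast
    qed
  qed
  define S where "S = (\<Union>r\<in>T. supS r)"
  have Sfin: "finite S" unfolding S_def using T relfs supS_fin by blast
  have SU: "S \<subseteq> units_rep P" unfolding S_def using T relfs supS_U by blast
  have SC: "S \<subseteq> {z. z \<noteq> 0}" using SU by (auto simp: U_iff)
  have tzr: "E.tz S (Phi P r)" if rT: "r \<in> T" for r
  proof -
    have rr: "r \<in> rels P" using rT T by blast
    have sub: "supS r \<subseteq> S" unfolding S_def using rT by blast
    from rr show ?thesis
      unfolding rels_def
    proof (elim UnE CollectE exE conjE)
      fix a b assume r: "r = ygen a b" and ab: "a \<in> units_rep P" "b \<in> units_rep P"
        and deg: "degree a + degree b < degree P"
      have ab0: "a \<noteq> 0" "b \<noteq> 0" using ab by (auto simp: U_iff)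
      have md: "a * b mod P = a * b" using deg ab0 by (simp add: mod_poly_less degree_mult_eq)
      have "supS r = {a, b, a * b mod P}" unfolding r supS_def by (auto simp: ygen_def)
      then have inS: "a \<in> S" "b \<in> S" "a * b mod P \<in> S" using sub by auto
      have "E.tz S (\<lambda>f. of_int (yi a b (a * b mod P) f))"
        by (rule E.tz_yi[OF Sfin SC inS]) (simp add: md)
      moreover have "Phi P r = (\<lambda>f. of_int (yi a b (a * b mod P) f))"
        unfolding r by (rule ext) (simp add: Phi_ygen yimg_yi)
      ultimately show ?thesis by simp
    next
      fix a b assume r: "r = (\<lambda>q. ygen a b q - ygen b a q)"
      have "Phi P r = (\<lambda>f. 0)"
        unfolding r by (rule ext) (simp add: Phi_diff fin_supp_ygen Phi_ygen yimg_def mult.commute)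
      then show ?thesis using E.tz_zero by simp
    next
      fix a b c assume r: "r = (\<lambda>q. ygen a b q + ygen (a * b mod P) c q - ygen a c q - ygen (a * c mod P) b q)"
      have X: "(a * b mod P) * c mod P = (a * c mod P) * b mod P"
      proof -
        have 1: "(a * b mod P) * c mod P = a * b * c mod P" by (rule mod_mult_left_eq)
        have 2: "(a * c mod P) * b mod P = a * c * b mod P" by (rule mod_mult_left_eq)
        show ?thesis unfolding 1 2 by (simp add: mult_ac)
      qed
      have "Phi P r = (\<lambda>f. 0)"
        unfolding r
        by (rule ext) (simp add: Phi_diff Phi_add fin_supp_ygen fin_supp_add fin_supp_diff Phi_ygen yimg_def X)
      then show ?thesis using E.tz_zero by simp
    qed
  qed
  have fsT: "\<And>r. r \<in> T \<Longrightarrow> fin_supp r" using T relfs by blast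
  have PhiC: "Phi P c = (\<lambda>f. \<Sum>r\<in>T. u r * Phi P r f)"
    unfolding ce by (rule ext) (rule Phi_lin_sum[OF T(1) fsT])
  have "E.tz S (\<lambda>f. \<Sum>r\<in>T. u r * Phi P r f)" by (rule E.tz_sum[OF Sfin SC T(1) tzr])
  moreover have "{f. Phi P c f \<noteq> 0} \<subseteq> S"
  proof
    fix f assume "f \<in> {f. Phi P c f \<noteq> 0}"
    then obtain r where r: "r \<in> T" "Phi P r f \<noteq> 0" unfolding PhiC
      by (metis (mono_tags, lifting) mem_Collect_eq mult_zero_right sum.neutral)
    then have "f \<in> supS r" using Phi_supp[OF fsT[OF r(1)]] by blast
    then show "f \<in> S" unfolding S_def using r by blast
  qed
  ultimately show ?thesis unfolding zero_FtQ_def using E.tz_iff[OF Sfin] PhiC by simp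
qed

end

lemma fun_sum_apply: "finite T \<Longrightarrow> (\<Sum>t\<in>T. F t) = (\<lambda>q. \<Sum>t\<in>T. (F t :: 'b \<Rightarrow> rat) q)"
  by (induction T rule: finite_induct) (auto simp: plus_fun_def zero_fun_def)

lemma qsep:
  fixes S :: "('b \<Rightarrow> rat) set" and x :: "'b \<Rightarrow> rat"
  assumes nx: "x \<notin> qspan S"
  shows "\<exists>\<phi>. (\<forall>y z. \<phi> (\<lambda>q. y q + z q) = \<phi> y + \<phi> z) \<and> (\<forall>r y. \<phi> (\<lambda>q. r * y q) = r * \<phi> y)
     \<and> (\<forall>s\<in>S. \<phi> s = 0) \<and> \<phi> x = 1"
proof -
  interpret V: vector_space "\<lambda>(r::rat) (f::'b \<Rightarrow> rat). (\<lambda>q. r * f q)"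
    by unfold_locales (auto simp: fun_eq_iff algebra_simps plus_fun_def)
  interpret R: vector_space "(*) :: rat \<Rightarrow> rat \<Rightarrow> rat"
    by unfold_locales (auto simp: algebra_simps)
  interpret VP: vector_space_pair "\<lambda>(r::rat) (f::'b \<Rightarrow> rat). (\<lambda>q. r * f q)" "(*) :: rat \<Rightarrow> rat \<Rightarrow> rat" ..
  have "V.span S \<subseteq> qspan S"
  proof
    fix y assume "y \<in> V.span S"
    then obtain t r where tr: "finite t" "t \<subseteq> S" "y = (\<Sum>a\<in>t. (\<lambda>q. r a * a q))"
      unfolding V.span_explicit by blast
    then have "y = (\<lambda>q. \<Sum>a\<in>t. r a * a q)" using fun_sum_apply[OF tr(1), of "\<lambda>a q. r a * a q"] by simp
    then show "y \<in> qspan S" unfolding qspan_def using tr by blast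
  qed
  then have nx': "x \<notin> V.span S" using nx by blast
  obtain B where B: "B \<subseteq> V.span S" "V.independent B" "V.span S \<subseteq> V.span B"
    by (rule V.maximal_independent_subset)
  have "V.span B \<subseteq> V.span S" using V.span_mono[OF B(1)] V.span_span by blast
  then have xB: "x \<notin> V.span B" using nx' by blast
  have ind: "V.independent (insert x B)" by (rule V.independent_insertI[OF xB B(2)])
  obtain g where g: "Vector_Spaces.linear (\<lambda>(r::rat) (f::'b \<Rightarrow> rat). (\<lambda>q. r * f q)) (*) g"
    and gv: "\<forall>y\<in>insert x B. g y = (if y = x then 1 else 0)"
    using VP.linear_independent_extend[OF ind, of "\<lambda>y. if y = x then 1 else 0"] by blast
  have gB: "g y = 0" if "y \<in> B" for y
  proof -
    have "y \<noteq> x" using that xB V.span_base by blast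
    then show ?thesis using gv that by auto
  qed
  show ?thesis
  proof (intro exI conjI allI ballI)
    fix y z :: "'b \<Rightarrow> rat"
    have "(\<lambda>q. y q + z q) = y + z" by (simp add: plus_fun_def)
    then show "g (\<lambda>q. y q + z q) = g y + g z" using VP.linear_add[OF g] by simp
  next
    fix r y
    show "g (\<lambda>q. r * y q) = r * g y" using VP.linear_scale[OF g] by simp
  next
    fix s assume "s \<in> S"
    then have "s \<in> V.span B" using B(3) V.span_base by blast
    then show "g s = 0" using VP.linear_eq_0_on_span[OF g gB] by blast
  next
    show "g x = 1" using gv by simp
  qed
qed

abbreviation pfF :: "'a::field poly \<Rightarrow> 'a poly multiset" where
  "pfF p \<equiv> factorial_semiring.prime_factorization 0 (*) 1 (\<lambda>p. smult (inverse (lead_coeff p)) p) p"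

lemma prime_factor_exists:
  fixes p :: "'a::field poly"
  assumes p: "p \<noteq> 0" "degree p > 0"
  shows "\<exists>q. prime_elem q \<and> q dvd p"
proof (cases "pfF p = {#}")
  case True
  have "prod_mset (pfF p) = smult (inverse (lead_coeff p)) p"
    by (rule field_poly_prod_mset_prime_factorization[OF p(1)])
  then have "smult (inverse (lead_coeff p)) p = 1" using True by simp
  then have "degree (smult (inverse (lead_coeff p)) p) = 0" by simp
  then show ?thesis using p by simp
next
  case False
  then obtain q where q: "q \<in># pfF p" by blast
  have "prime_elem q" by (rule field_poly_in_prime_factorization_imp_prime[OF q])
  moreover have "q dvd prod_mset (pfF p)" by (rule dvd_prod_mset[OF q])
  then have "q dvd smult (inverse (lead_coeff p)) p"
    using field_poly_prod_mset_prime_factorization[OF p(1)] by simp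
  then have "q dvd p" using p by (simp add: dvd_smult_iff)
  ultimately show ?thesis by blast
qed

context pctx
begin

lemma msum_small:
  fixes g :: "'a poly \<Rightarrow> rat"
  assumes gs: "\<And>a b. a \<in> units_rep P \<Longrightarrow> b \<in> units_rep P \<Longrightarrow> degree a + degree b < degree P \<Longrightarrow> g (a * b) = g a + g b"
  shows "set_mset X \<subseteq> units_rep P \<Longrightarrow> degree (prod_mset X) < degree P \<Longrightarrow> (\<Sum>x\<in>#X. g x) = g (prod_mset X)"
proof (induction X)
  case empty
  have "g (1 * 1) = g 1 + g 1" using gs[OF one_U one_U] degP by simp
  then show ?case by simp
next
  case (add x X)
  have x: "x \<in> units_rep P" using add.prems by simp
  have X0: "prod_mset X \<noteq> 0" using add.prems by (auto simp: U_iff)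
  have dg: "degree (x * prod_mset X) = degree x + degree (prod_mset X)"
    using x X0 by (simp add: degree_mult_eq U_iff)
  then have "degree (prod_mset X) < degree P" using add.prems by simp
  then have XU: "prod_mset X \<in> units_rep P" using X0 by (simp add: U_iff)
  have "(\<Sum>x\<in>#X. g x) = g (prod_mset X)" using add.IH add.prems \<open>degree (prod_mset X) < degree P\<close> by simp
  moreover have "g (x * prod_mset X) = g x + g (prod_mset X)" using gs[OF x XU] dg add.prems by simp
  ultimately show ?case by simp
qed

lemma msum_eq:
  fixes g :: "'a poly \<Rightarrow> rat"
  assumes gs: "\<And>a b. a \<in> units_rep P \<Longrightarrow> b \<in> units_rep P \<Longrightarrow> degree a + degree b < degree P \<Longrightarrow> g (a * b) = g a + g b"
  shows "set_mset X \<subseteq> units_rep P \<Longrightarrow> set_mset Y \<subseteq> units_rep P \<Longrightarrow> prod_mset X = prod_mset Y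
    \<Longrightarrow> (\<Sum>x\<in>#X. g x) = (\<Sum>y\<in>#Y. g y)"
proof (induction "degree (prod_mset X)" arbitrary: X Y rule: less_induct)
  case less
  show ?case
  proof (cases "\<exists>x\<in>#X. degree x > 0")
    case False
    have X0: "0 \<notin># X" using less.prems by (auto simp: U_iff)
    have "degree (prod_mset X) = 0"
      using False X0 by (induction X) (auto simp: degree_mult_eq)
    then have dX: "degree (prod_mset X) < degree P" using degP by simp
    then have dY: "degree (prod_mset Y) < degree P" using less.prems by simp
    show ?thesis using msum_small[OF gs less.prems(1) dX] msum_small[OF gs less.prems(2) dY] less.prems(3) by simp
  next
    case True
    then obtain x where x: "x \<in># X" "degree x > 0" by blast
    have xU: "x \<in> units_rep P" using x less.prems by auto
    then have x0: "x \<noteq> 0" by (simp add: U_iff)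
    obtain q where q: "prime_elem q" "q dvd x" using prime_factor_exists[OF x0 x(2)] by blast
    have q0: "q \<noteq> 0" using q by auto
    have "q dvd prod_mset Y" using q(2) dvd_prod_mset[OF x(1)] less.prems(3) dvd_trans by metis
    then obtain y where y: "y \<in># Y" "q dvd y" using prime_elem_dvd_prod_msetE[OF q(1)] by metis
    have yU: "y \<in> units_rep P" using y less.prems by auto
    then have y0: "y \<noteq> 0" by (simp add: U_iff)
    obtain x' where x': "x = q * x'" using q(2) by (auto elim: dvdE)
    obtain y' where y': "y = q * y'" using y(2) by (auto elim: dvdE)
    have x'0: "x' \<noteq> 0" and y'0: "y' \<noteq> 0" using x0 y0 x' y' by auto
    have dx: "degree x = degree q + degree x'" using x' q0 x'0 by (simp add: degree_mult_eq)
    have dy: "degree y = degree q + degree y'" using y' q0 y'0 by (simp add: degree_mult_eq)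
    have dq: "degree q > 0" using q(1) q0 is_unit_iff_degree prime_elem_not_unit by blast
    have qU: "q \<in> units_rep P" using q0 dx xU by (simp add: U_iff)
    have x'U: "x' \<in> units_rep P" using x'0 dx xU by (simp add: U_iff)
    have y'U: "y' \<in> units_rep P" using y'0 dy yU by (simp add: U_iff)
    have gx: "g x = g q + g x'" using gs[OF qU x'U] dx xU x' by (simp add: U_iff)
    have gy: "g y = g q + g y'" using gs[OF qU y'U] dy yU y' by (simp add: U_iff)
    define X' where "X' = add_mset x' (X - {#x#})"
    define Y' where "Y' = add_mset y' (Y - {#y#})"
    have pX: "prod_mset X = q * prod_mset X'"
      unfolding X'_def using prod_mset.remove[OF x(1)] x' by (simp add: mult.assoc)
    have pY: "prod_mset Y = q * prod_mset Y'"
      unfolding Y'_def using prod_mset.remove[OF y(1)] y' by (simp add: mult.assoc)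
    have eq': "prod_mset X' = prod_mset Y'" using pX pY less.prems(3) q0 by simp
    have X'U: "set_mset X' \<subseteq> units_rep P" unfolding X'_def using less.prems(1) x'U
      by (auto dest: in_diffD)
    have Y'U: "set_mset Y' \<subseteq> units_rep P" unfolding Y'_def using less.prems(2) y'U
      by (auto dest: in_diffD)
    have "prod_mset X \<noteq> 0" using less.prems(1) by (auto simp: U_iff)
    then have "prod_mset X' \<noteq> 0" using pX by auto
    then have "degree (prod_mset X) = degree q + degree (prod_mset X')" using pX q0 by (simp add: degree_mult_eq)
    then have "degree (prod_mset X') < degree (prod_mset X)" using dq by simp
    then have IH: "(\<Sum>x\<in>#X'. g x) = (\<Sum>y\<in>#Y'. g y)" using less.hyps X'U Y'U eq' by blast
    have sX: "(\<Sum>x\<in>#X. g x) = g q + (\<Sum>x\<in>#X'. g x)"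
    proof -
      have "(\<Sum>x\<in>#X. g x) = (\<Sum>x\<in>#add_mset x (X - {#x#}). g x)" using insert_DiffM[OF x(1)] by simp
      then have "(\<Sum>x\<in>#X. g x) = g x + (\<Sum>x\<in>#X - {#x#}. g x)" by simp
      then show ?thesis unfolding X'_def using gx by simp
    qed
    have sY: "(\<Sum>y\<in>#Y. g y) = g q + (\<Sum>y\<in>#Y'. g y)"
    proof -
      have "(\<Sum>y\<in>#Y. g y) = (\<Sum>y\<in>#add_mset y (Y - {#y#}). g y)" using insert_DiffM[OF y(1)] by simp
      then have "(\<Sum>y\<in>#Y. g y) = g y + (\<Sum>y\<in>#Y - {#y#}. g y)" by simp
      then show ?thesis unfolding Y'_def using gy by simp
    qed
    show ?thesis using sX sY IH by simp
  qed
qed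

end

lemma rep_prod: "finite S \<Longrightarrow> prod_mset (\<Sum>x\<in>S. replicate_mset (k x) x) = (\<Prod>x\<in>S. x ^ k x)"
  by (induction S rule: finite_induct) auto

lemma rep_set: "finite S \<Longrightarrow> set_mset (\<Sum>x\<in>S. replicate_mset (k x) x) \<subseteq> S"
  by (induction S rule: finite_induct) (auto split: if_splits)

lemma rep_sum: "finite S \<Longrightarrow> (\<Sum>y\<in>#(\<Sum>x\<in>S. replicate_mset (k x) x). (g y :: rat)) = (\<Sum>x\<in>S. of_nat (k x) * g x)"
  by (induction S rule: finite_induct) (auto simp: sum_mset_replicate_mset)

context pctx
begin

lemma part2_fwd:
  assumes c: "c \<in> freeY P" and z: "zero_FtQ (Phi P c)"
  shows "c \<in> qspan (rels P)"
proof (rule ccontr)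
  assume nc: "c \<notin> qspan (rels P)"
  obtain \<phi> where padd: "\<And>y z. \<phi> (\<lambda>q. y q + z q) = \<phi> y + \<phi> z"
    and psc: "\<And>r y. \<phi> (\<lambda>q. r * y q) = r * \<phi> y"
    and prel: "\<And>s. s \<in> rels P \<Longrightarrow> \<phi> s = 0" and pc: "\<phi> c = 1"
    using qsep[OF nc] by blast
  have pdiff: "\<phi> (\<lambda>q. y q - z q) = \<phi> y - \<phi> z" for y z
    using padd[of y "\<lambda>q. (-1) * z q"] psc[of "-1" z] by simp
  have p0: "\<phi> (\<lambda>q. 0) = 0" using psc[of 0 "\<lambda>q. 0"] by simp
  have psum: "\<phi> (\<lambda>q. \<Sum>t\<in>T. u t * F t q) = (\<Sum>t\<in>T. u t * \<phi> (F t))" if "finite T"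
    for T :: "('a poly \<times> 'a poly) set" and u F
    using that
  proof (induction T rule: finite_induct)
    case empty then show ?case using p0 by simp
  next
    case (insert t T)
    have "\<phi> (\<lambda>q. \<Sum>t\<in>insert t T. u t * F t q) = \<phi> (\<lambda>q. (\<lambda>q. u t * F t q) q + (\<lambda>q. \<Sum>t\<in>T. u t * F t q) q)"
      using insert by simp
    also have "\<dots> = u t * \<phi> (F t) + (\<Sum>t\<in>T. u t * \<phi> (F t))" unfolding padd psc insert.IH ..
    finally show ?case using insert by simp
  qed
  define f where "f a b = \<phi> (ygen a b)" for a b
  have fsym: "f a b = f b a" if "a \<in> units_rep P" "b \<in> units_rep P" for a b
  proof -
    have "(\<lambda>q. ygen a b q - ygen b a q) \<in> rels P" unfolding rels_def using that by blast
    then show ?thesis using prel pdiff unfolding f_def by fastforce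
  qed
  have fcoc0: "f a b + f (a * b mod P) c - f a c - f (a * c mod P) b = 0"
    if "a \<in> units_rep P" "b \<in> units_rep P" "c \<in> units_rep P" for a b c
  proof -
    have "(\<lambda>q. ygen a b q + ygen (a * b mod P) c q - ygen a c q - ygen (a * c mod P) b q) \<in> rels P"
      unfolding rels_def using that by blast
    then have "\<phi> (\<lambda>q. ygen a b q + ygen (a * b mod P) c q - ygen a c q - ygen (a * c mod P) b q) = 0" by (rule prel)
    then show ?thesis unfolding f_def pdiff padd .
  qed
  have fsmall: "f a b = 0" if "a \<in> units_rep P" "b \<in> units_rep P" "degree a + degree b < degree P" for a b
  proof -
    have "ygen a b \<in> rels P" unfolding rels_def using that by blast
    then show ?thesis unfolding f_def by (rule prel)
  qed
  have "\<exists>g. \<forall>a\<in>units_rep P. \<forall>b\<in>units_rep P. f a b = g a + g b - g (a * b mod P)"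
  proof (rule cocycle_split[where e = 1])
    fix a b assume "a \<in> units_rep P" "b \<in> units_rep P"
    then show "a * b mod P \<in> units_rep P" by (rule mul_U)
  next
    fix a b c :: "'a poly"
    show "a * b mod P * c mod P = a * (b * c mod P) mod P" by (rule mul_assoc)
  next
    fix a b :: "'a poly"
    show "a * b mod P = b * a mod P" by (simp add: mult.commute)
  next
    show "1 \<in> units_rep P" by (rule one_U)
  next
    fix a assume "a \<in> units_rep P" then show "1 * a mod P = a" by (simp add: U_mod)
  next
    fix a assume "a \<in> units_rep P" then show "\<exists>b\<in>units_rep P. b * a mod P = 1" by (rule mul_inv)
  next
    fix a b assume "a \<in> units_rep P" "b \<in> units_rep P" then show "f a b = f b a" by (rule fsym)
  next
    fix a b c assume abc: "a \<in> units_rep P" "b \<in> units_rep P" "c \<in> units_rep P"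
    have 1: "f b c + f (b * c mod P) a - f b a - f (b * a mod P) c = 0" by (rule fcoc0[OF abc(2,3,1)])
    have 2: "f (b * c mod P) a = f a (b * c mod P)" by (rule fsym[OF mul_U[OF abc(2,3)] abc(1)])
    have 3: "f b a = f a b" by (rule fsym[OF abc(2,1)])
    have 4: "b * a mod P = a * b mod P" by (simp add: mult.commute)
    show "f a b + f (a * b mod P) c = f b c + f a (b * c mod P)" using 1 2 3 4 by simp
  next
    fix a assume a: "a \<in> units_rep P"
    show "f 1 a = 0" by (rule fsmall[OF one_U a]) (use a in \<open>simp add: U_iff\<close>)
  qed
  then obtain g where g: "\<And>a b. a \<in> units_rep P \<Longrightarrow> b \<in> units_rep P \<Longrightarrow> f a b = g a + g b - g (a * b mod P)"
    by blast
  have gs: "g (a * b) = g a + g b"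
    if ab: "a \<in> units_rep P" "b \<in> units_rep P" and d: "degree a + degree b < degree P" for a b
  proof -
    have "a \<noteq> 0" "b \<noteq> 0" using ab by (auto simp: U_iff)
    then have "a * b mod P = a * b" using d by (simp add: mod_poly_less degree_mult_eq)
    then show ?thesis using g[OF ab] fsmall[OF ab d] by simp
  qed
  have fs: "fin_supp c" and cs: "{p. c p \<noteq> 0} \<subseteq> units_rep P \<times> units_rep P" using c by (auto simp: freeY_def)
  define T where "T = {p. c p \<noteq> 0}"
  have Tfin: "finite T" using fs unfolding T_def fin_supp_def .
  define S where "S = supS c"
  have Sfin: "finite S" unfolding S_def by (rule supS_fin[OF fs])
  have SU: "S \<subseteq> units_rep P" unfolding S_def by (rule supS_U[OF cs])
  have cexp: "c = (\<lambda>q. \<Sum>p\<in>T. c p * ygen (fst p) (snd p) q)"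
  proof
    fix q
    have "(\<Sum>p\<in>T. c p * ygen (fst p) (snd p) q) = (\<Sum>p\<in>T. if p = q then c p else 0)"
      by (rule sum.cong) (auto simp: ygen_def)
    also have "\<dots> = c q" using Tfin by (simp add: sum.delta' T_def)
    finally show "c q = (\<Sum>p\<in>T. c p * ygen (fst p) (snd p) q)" by simp
  qed
  have "\<phi> c = (\<Sum>p\<in>T. c p * f (fst p) (snd p))"
    unfolding f_def by (subst cexp) (rule psum[OF Tfin])
  also have "\<dots> = (\<Sum>p\<in>T. c p * (g (fst p) + g (snd p) - g (fst p * snd p mod P)))"
    by (rule sum.cong[OF refl]) (use cs T_def g in auto)
  also have "\<dots> = (\<Sum>x\<in>S. Phi P c x * g x)"
  proof -
    have inner: "(\<Sum>x\<in>S. yimg P (fst p) (snd p) x * g x) = g (fst p) + g (snd p) - g (fst p * snd p mod P)"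
      if p: "p \<in> T" for p
    proof -
      have sub: "fst p \<in> S" "snd p \<in> S" "fst p * snd p mod P \<in> S"
        using p unfolding S_def supS_def T_def by blast+
      have "(\<Sum>x\<in>S. yimg P (fst p) (snd p) x * g x) = (\<Sum>x\<in>S. ((if x = fst p then g x else 0)
         + (if x = snd p then g x else 0)) - (if x = fst p * snd p mod P then g x else 0))"
        by (rule sum.cong) (auto simp: yimg_def algebra_simps)
      also have "\<dots> = g (fst p) + g (snd p) - g (fst p * snd p mod P)"
        using Sfin sub by (simp add: sum.distrib sum_subtractf sum.delta)
      finally show ?thesis .
    qed
    have "(\<Sum>x\<in>S. Phi P c x * g x) = (\<Sum>x\<in>S. \<Sum>p\<in>T. c p * (yimg P (fst p) (snd p) x * g x))"
      unfolding Phi_def T_def[symmetric] by (simp add: sum_distrib_right mult.assoc)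
    also have "\<dots> = (\<Sum>p\<in>T. c p * (\<Sum>x\<in>S. yimg P (fst p) (snd p) x * g x))"
      by (subst sum.swap) (simp add: sum_distrib_left)
    also have "\<dots> = (\<Sum>p\<in>T. c p * (g (fst p) + g (snd p) - g (fst p * snd p mod P)))"
      by (rule sum.cong[OF refl]) (simp add: inner)
    finally show ?thesis by simp
  qed
  also have "\<dots> = 0"
  proof -
    interpret E: eqctx "(=) :: 'a poly \<Rightarrow> 'a poly \<Rightarrow> bool" "{z. z \<noteq> 0}" by (rule eqctx_eq)
    have "E.tz S (Phi P c)" using z E.tz_iff[OF Sfin Phi_supp[OF fs, folded S_def]] unfolding zero_FtQ_def by simp
    then obtain N :: nat where N: "N > 0" "\<forall>x. of_nat N * Phi P c x \<in> (\<int> :: rat set)"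
      and ev: "E.ev S (\<lambda>x. \<lfloor>of_nat N * Phi P c x\<rfloor>) 1 1" unfolding E.tz_def by blast
    define m where "m x = \<lfloor>of_nat N * Phi P c x\<rfloor>" for x
    have mN: "of_int (m x) = of_nat N * Phi P c x" for x
      unfolding m_def using N(2) by (metis Ints_cases floor_of_int)
    have ppnn: "pp S m = nn S m" using ev unfolding E.ev_def m_def by simp
    define Xp where "Xp = (\<Sum>x\<in>S. replicate_mset (nat (m x)) x)"
    define Xn where "Xn = (\<Sum>x\<in>S. replicate_mset (nat (- m x)) x)"
    have "prod_mset Xp = prod_mset Xn"
      using ppnn unfolding Xp_def Xn_def rep_prod[OF Sfin] pp_def nn_def .
    moreover have "set_mset Xp \<subseteq> units_rep P" "set_mset Xn \<subseteq> units_rep P"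
      unfolding Xp_def Xn_def using rep_set[OF Sfin, of "\<lambda>x. nat (m x)"] rep_set[OF Sfin, of "\<lambda>x. nat (- m x)"] SU by auto
    ultimately have "(\<Sum>x\<in>#Xp. g x) = (\<Sum>x\<in>#Xn. g x)" using msum_eq[OF gs] by blast
    then have "(\<Sum>x\<in>S. of_nat (nat (m x)) * g x) = (\<Sum>x\<in>S. of_nat (nat (- m x)) * g x)"
      unfolding Xp_def Xn_def rep_sum[OF Sfin] .
    then have "(\<Sum>x\<in>S. (of_nat (nat (m x)) - of_nat (nat (- m x))) * g x) = 0"
      by (simp add: left_diff_distrib sum_subtractf)
    moreover have "(of_nat (nat (m x)) - of_nat (nat (- m x)) :: rat) = of_nat N * Phi P c x" for x
      unfolding mN[symmetric] by (cases "m x \<ge> 0") simp_all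
    ultimately have "(\<Sum>x\<in>S. of_nat N * (Phi P c x * g x)) = 0" by (simp add: mult.assoc)
    then have "of_nat N * (\<Sum>x\<in>S. Phi P c x * g x) = 0" by (simp add: sum_distrib_left)
    then show ?thesis using N(1) by simp
  qed
  finally show False using pc by simp
qed

end

theorem lemma5:
  fixes P :: "'a::field poly"
  assumes "lead_coeff P = 1" and "irreducible P" and "degree P \<ge> 1"
  shows "(\<forall>c\<in>freeY P. Phi P c \<in> Vspace P \<and> sP_zero P (Phi P c))
       \<and> (\<forall>c\<in>freeY P. zero_FtQ (Phi P c) \<longleftrightarrow> c \<in> qspan (rels P))
       \<and> (\<forall>w\<in>Vspace P. sP_zero P w \<longrightarrow>
            (\<exists>c\<in>freeY P. zero_FtQ (\<lambda>f. Phi P c f - w f)))"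
proof -
  interpret pctx P using assms(2,3) by unfold_locales
  show ?thesis using part1 part2_fwd part2_rev part3 by blast
qed

end
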